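(* Let $(F_i)_{i\in\mathbb{N}}$ be feedback functions $F_i\colon\mathbb{N}\to(0,\infty)$ and $(X_i(0))_{i\in\mathbb{N}}\subset\mathbb{N}$ initial values. Assume there is an infinite set $B\subset\mathbb{N}$ with $$\sum_{k=1}^\infty\sup_{i\in B}\frac{1}{F_i(k)}<\infty.$$ Then: 1. $\lim_{A\to\infty}\mathbb{P}\big(X^{(A)}_1(\infty)=X_1(0)\big)=1$. 2. If in addition $\limsup_{i\to\infty}F_i(X_i(0))<\infty$, then $\frac1A\#\{i\in[A]:X_i^{(A)}(\infty)=X_i(0)\}\to1$ in distribution as $A\to\infty$. 3. If in addition $\liminf_{i\to\infty}F_i(X_i(0))>0$ and $\lim_{i\to\infty}\frac1iF_i(X_i(0)+1)=0$, then $\#\{i\in[A]:X_i^{(A)}(\infty)\ne X_i(0)\}\to\infty$ in distribution as $A\to\infty$, i.e. for every $K\in\mathbb{N}$ the probability that this number is at least $K$ tends to $1$.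
   Context: $\mathbb{N}=\{1,2,\dots\}$, $[A]=\{1,\dots,A\}$, $e^{(i)}$ the $i$-th unit vector. Let $\Xi_1,\Xi_2,\dots$ be independent pure birth processes: $\Xi_i$ has independent sojourn times $\tau_i(k)$, $k\ge X_i(0)$, exponential with rate $F_i(k)$, and $\Xi_i(t)=\min\{k:\sum_{l=X_i(0)}^k\tau_i(l)>t\}$ (min of empty set $=\infty$). For each $A\ge2$, with $\Xi^{(A)}=(\Xi_1,\dots,\Xi_A)$, $t_0=0$, $t_{n+1}=\inf\{t>t_n:\Xi^{(A)}(t)\ne\Xi^{(A)}(t_n)\}$, the $A$-agent generalized Pólya urn is $X^{(A)}(n)=\Xi^{(A)}(t_n)$, a Markov chain with $\mathbb{P}(X^{(A)}(n+1)-X^{(A)}(n)=e^{(i)}\mid X^{(A)}(n))=F_i(X^{(A)}_i(n))/\sum_{j=1}^AF_j(X^{(A)}_j(n))$. $X_i^{(A)}(\infty)=\lim_{n\to\infty}X_i^{(A)}(n)\in\mathbb{N}\cup\{\infty\}$. $\mathbb{P}$ is the law of the sequence of birth processes. *)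

theory Defs
  imports "HOL-Probability.Probability"
begin

text \<open>Sample space: the family of sojourn times tau(i,k) of agent i at level k.
  Agents are indexed by i >= 1, levels by k >= 1 (index 0 unused).
  tau(i,k) is exponential with rate F i k for k >= X0 i; the remaining
  coordinates are irrelevant and set to the point mass at 0.\<close>

definition sojourn_law :: "(nat \<Rightarrow> nat \<Rightarrow> real) \<Rightarrow> (nat \<Rightarrow> nat) \<Rightarrow> (nat \<times> nat \<Rightarrow> real) measure" where
  "sojourn_law F X0 = PiM UNIV (\<lambda>(i, k).
     if 1 \<le> i \<and> X0 i \<le> k then density lborel (exponential_density (F i k))
     else return borel 0)"

text \<open>Pure birth process started at x0 with sojourn times tau; time in [0,infinity],
  value in N \<union> {infinity}: Xi(t) = min {k. sum_{l=x0}^k tau l > t}.\<close>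

definition birth :: "nat \<Rightarrow> (nat \<Rightarrow> real) \<Rightarrow> ennreal \<Rightarrow> enat" where
  "birth x0 tau t =
     (if \<exists>k. t < ennreal (\<Sum>l=x0..k. tau l)
      then enat (LEAST k. t < ennreal (\<Sum>l=x0..k. tau l)) else \<infinity>)"

primrec jump_time :: "nat \<Rightarrow> (nat \<Rightarrow> nat) \<Rightarrow> (nat \<times> nat \<Rightarrow> real) \<Rightarrow> nat \<Rightarrow> ennreal" where
  "jump_time A X0 tau 0 = 0"
| "jump_time A X0 tau (Suc n) =
     Inf {t. jump_time A X0 tau n < t \<and>
             (\<exists>i\<in>{1..A}. birth (X0 i) (\<lambda>l. tau (i, l)) t
                          \<noteq> birth (X0 i) (\<lambda>l. tau (i, l)) (jump_time A X0 tau n))}"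

text \<open>The A-agent generalized Polya urn X^(A)(n)_i = Xi_i(t_n).\<close>

definition urn :: "nat \<Rightarrow> (nat \<Rightarrow> nat) \<Rightarrow> (nat \<times> nat \<Rightarrow> real) \<Rightarrow> nat \<Rightarrow> nat \<Rightarrow> enat" where
  "urn A X0 tau n i = birth (X0 i) (\<lambda>l. tau (i, l)) (jump_time A X0 tau n)"

definition urn_final :: "nat \<Rightarrow> (nat \<Rightarrow> nat) \<Rightarrow> (nat \<times> nat \<Rightarrow> real) \<Rightarrow> nat \<Rightarrow> enat" where
  "urn_final A X0 tau i = lim (\<lambda>n. urn A X0 tau n i)"

end

theory Submission
  imports Defs
begin

lemma enat_le_by: "(\<And>m. y \<le> enat m \<Longrightarrow> x \<le> enat m) \<Longrightarrow> (x::enat) \<le> y"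
  by (cases y) auto

lemma birth_le_iff:
  "birth x0 tau t \<le> enat m \<longleftrightarrow> (\<exists>j\<le>m. t < ennreal (\<Sum>l=x0..j. tau l))"
proof (cases "\<exists>k. t < ennreal (\<Sum>l=x0..k. tau l)")
  case True
  then have b: "birth x0 tau t = enat (LEAST k. t < ennreal (\<Sum>l=x0..k. tau l))"
    by (simp add: birth_def)
  show ?thesis
  proof
    assume "birth x0 tau t \<le> enat m"
    then have "(LEAST k. t < ennreal (\<Sum>l=x0..k. tau l)) \<le> m" using b by simp
    moreover have "t < ennreal (\<Sum>l=x0..(LEAST k. t < ennreal (\<Sum>l=x0..k. tau l)). tau l)"
      by (rule LeastI_ex[OF True])
    ultimately show "\<exists>j\<le>m. t < ennreal (\<Sum>l=x0..j. tau l)" by blast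
  next
    assume "\<exists>j\<le>m. t < ennreal (\<Sum>l=x0..j. tau l)"
    then obtain j where "j \<le> m" "t < ennreal (\<Sum>l=x0..j. tau l)" by blast
    then have "(LEAST k. t < ennreal (\<Sum>l=x0..k. tau l)) \<le> j" by (intro Least_le)
    with \<open>j \<le> m\<close> show "birth x0 tau t \<le> enat m" using b by simp
  qed
next
  case False
  then show ?thesis by (simp add: birth_def)
qed

lemma birth_mono: "t \<le> t' \<Longrightarrow> birth x0 tau t \<le> birth x0 tau t'"
  by (rule enat_le_by) (auto simp: birth_le_iff dest: le_less_trans)

lemma birth_le_x0: "birth x0 tau t \<le> enat x0 \<longleftrightarrow> t < ennreal (tau x0)"
proof -
  have "(\<exists>j\<le>x0. t < ennreal (\<Sum>l=x0..j. tau l)) \<longleftrightarrow> t < ennreal (tau x0)"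
  proof
    assume "\<exists>j\<le>x0. t < ennreal (\<Sum>l=x0..j. tau l)"
    then obtain j where j: "j \<le> x0" "t < ennreal (\<Sum>l=x0..j. tau l)" by blast
    show "t < ennreal (tau x0)"
    proof (cases "j = x0")
      case True then show ?thesis using j by simp
    next
      case False then have "{x0..j} = {}" using j by auto
      then show ?thesis using j by simp
    qed
  qed (intro exI[of _ x0], simp)
  then show ?thesis by (simp add: birth_le_iff)
qed

lemma birth_ge_x0: "enat x0 \<le> birth x0 tau t"
proof (rule ccontr)
  assume "\<not> enat x0 \<le> birth x0 tau t"
  then obtain m where m: "birth x0 tau t = enat m" "m < x0"
    by (cases "birth x0 tau t") auto
  then have "\<exists>j\<le>m. t < ennreal (\<Sum>l=x0..j. tau l)" using birth_le_iff[of x0 tau t m] by simp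
  then obtain j where "j \<le> m" "t < ennreal (\<Sum>l=x0..j. tau l)" by blast
  moreover have "{x0..j} = {}" using \<open>j \<le> m\<close> m by auto
  ultimately show False by simp
qed

lemma jump_time_Suc_ge: "jump_time A X0 tau n \<le> jump_time A X0 tau (Suc n)"
  by (simp only: jump_time.simps) (rule Inf_greatest, auto)

lemma jump_time_mono: "incseq (jump_time A X0 tau)"
  by (rule incseq_SucI) (rule jump_time_Suc_ge)

lemma urn_mono: "incseq (\<lambda>n. urn A X0 tau n i)"
  unfolding urn_def
  by (rule incseq_SucI) (intro birth_mono jump_time_Suc_ge)

lemma urn_final_SUP: "urn_final A X0 tau i = (SUP n. urn A X0 tau n i)"
  unfolding urn_final_def by (rule limI) (rule LIMSEQ_SUP[OF urn_mono])

lemma urn_final_eq_iff: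
  "urn_final A X0 tau i = enat (X0 i) \<longleftrightarrow> (\<forall>n. jump_time A X0 tau n < ennreal (tau (i, X0 i)))"
proof -
  have ge: "enat (X0 i) \<le> urn A X0 tau n i" for n unfolding urn_def by (rule birth_ge_x0)
  have "urn_final A X0 tau i = enat (X0 i) \<longleftrightarrow> (\<forall>n. urn A X0 tau n i \<le> enat (X0 i))"
  proof
    assume "urn_final A X0 tau i = enat (X0 i)"
    then show "\<forall>n. urn A X0 tau n i \<le> enat (X0 i)" unfolding urn_final_SUP
      by (metis SUP_upper UNIV_I)
  next
    assume a: "\<forall>n. urn A X0 tau n i \<le> enat (X0 i)"
    have "(SUP n. urn A X0 tau n i) \<le> enat (X0 i)" using a by (simp add: SUP_le_iff)
    moreover have "enat (X0 i) \<le> (SUP n. urn A X0 tau n i)" using ge[of 0] by (metis SUP_upper2 UNIV_I)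
    ultimately show "urn_final A X0 tau i = enat (X0 i)" unfolding urn_final_SUP by simp
  qed
  also have "\<dots> \<longleftrightarrow> (\<forall>n. jump_time A X0 tau n < ennreal (tau (i, X0 i)))"
    unfolding urn_def birth_le_x0 ..
  finally show ?thesis .
qed

definition Expl :: "nat \<Rightarrow> (nat \<Rightarrow> real) \<Rightarrow> ennreal" where
  "Expl x0 tau = (SUP k. ennreal (\<Sum>l=x0..k. tau l))"

lemma psum_mono:
  fixes tau :: "nat \<Rightarrow> real"
  assumes g: "\<forall>k\<ge>x0. 0 < tau k" and "j \<le> m"
  shows "(\<Sum>l=x0..j. tau l) \<le> (\<Sum>l=x0..m. tau l)"
  by (rule sum_mono2) (use assms in \<open>auto intro: less_imp_le\<close>)

lemma psum_nonneg:
  fixes tau :: "nat \<Rightarrow> real"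
  assumes g: "\<forall>k\<ge>x0. 0 < tau k"
  shows "0 \<le> (\<Sum>l=x0..j. tau l)"
  by (rule sum_nonneg) (use g in \<open>auto intro: less_imp_le\<close>)

lemma birth_finite:
  assumes "t < Expl x0 tau" shows "\<exists>m. birth x0 tau t = enat m"
proof -
  obtain k where "t < ennreal (\<Sum>l=x0..k. tau l)" using assms unfolding Expl_def by (auto simp: less_SUP_iff)
  then have "birth x0 tau t \<le> enat k" by (auto simp: birth_le_iff)
  then show ?thesis by (cases "birth x0 tau t") auto
qed

lemma birth_jump:
  assumes g: "\<forall>k\<ge>x0. 0 < tau k" and b: "birth x0 tau t = enat m"
  shows "t < ennreal (\<Sum>l=x0..m. tau l)"
    and "\<And>t'. t \<le> t' \<Longrightarrow> t' < ennreal (\<Sum>l=x0..m. tau l) \<Longrightarrow> birth x0 tau t' = enat m"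
    and "\<And>t'. ennreal (\<Sum>l=x0..m. tau l) \<le> t' \<Longrightarrow> birth x0 tau t' \<noteq> enat m"
proof -
  from b obtain j where j: "j \<le> m" "t < ennreal (\<Sum>l=x0..j. tau l)"
    using birth_le_iff[of x0 tau t m] by auto
  then show "t < ennreal (\<Sum>l=x0..m. tau l)"
    using psum_mono[OF g j(1)] by (meson ennreal_leI less_le_trans)
  fix t' assume "t \<le> t'" "t' < ennreal (\<Sum>l=x0..m. tau l)"
  then have "birth x0 tau t' \<le> enat m" by (auto simp: birth_le_iff)
  moreover have "enat m \<le> birth x0 tau t'" using b birth_mono[OF \<open>t \<le> t'\<close>, of x0 tau] by simp
  ultimately show "birth x0 tau t' = enat m" by simp
next
  fix t' assume a: "ennreal (\<Sum>l=x0..m. tau l) \<le> t'"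
  have "\<not> birth x0 tau t' \<le> enat m"
  proof
    assume "birth x0 tau t' \<le> enat m"
    then obtain j where "j \<le> m" "t' < ennreal (\<Sum>l=x0..j. tau l)" by (auto simp: birth_le_iff)
    then show False using psum_mono[OF g \<open>j \<le> m\<close>] a
      by (meson ennreal_leI leD order_trans)
  qed
  then show "birth x0 tau t' \<noteq> enat m" by auto
qed

lemma Ex_pos:
  assumes g: "\<forall>k\<ge>x0. 0 < tau k" shows "0 < Expl x0 tau"
proof -
  have "ennreal (\<Sum>l=x0..x0. tau l) \<le> Expl x0 tau" unfolding Expl_def by (rule SUP_upper) auto
  moreover have "0 < ennreal (\<Sum>l=x0..x0. tau l)" using g by simp
  ultimately show ?thesis by (rule less_le_trans[rotated])
qed

lemma Ex_jump:
  assumes g: "\<forall>k\<ge>x0. 0 < tau k" and b: "birth x0 tau t = enat m"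
  shows "ennreal (\<Sum>l=x0..m. tau l) < Expl x0 tau"
proof -
  have m: "x0 \<le> m" using birth_ge_x0[of x0 tau t] b by simp
  have "(\<Sum>l=x0..Suc m. tau l) = (\<Sum>l=x0..m. tau l) + tau (Suc m)"
    using m by (simp add: sum.cl_ivl_Suc)
  moreover have "0 < tau (Suc m)" using g m by auto
  ultimately have "ennreal (\<Sum>l=x0..m. tau l) < ennreal (\<Sum>l=x0..Suc m. tau l)"
    using psum_nonneg[OF g, of m] by (subst ennreal_less_iff) auto
  also have "\<dots> \<le> Expl x0 tau" unfolding Expl_def by (rule SUP_upper) auto
  finally show ?thesis .
qed

lemma D1:
  assumes g: "\<forall>k\<ge>X0 b. 0 < tau (b, k)" and bA: "b \<in> {1..A}"
  shows "jump_time A X0 tau n < Expl (X0 b) (\<lambda>l. tau (b, l))"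
proof (induction n)
  case 0 show ?case using Ex_pos[of "X0 b" "\<lambda>l. tau (b, l)"] g by simp
next
  case (Suc n)
  let ?b = "birth (X0 b) (\<lambda>l. tau (b, l))"
  obtain m where m: "?b (jump_time A X0 tau n) = enat m"
    using birth_finite[OF Suc.IH] by blast
  let ?s = "ennreal (\<Sum>l=X0 b..m. tau (b, l))"
  have g': "\<forall>k\<ge>X0 b. 0 < (\<lambda>l. tau (b, l)) k" using g by simp
  have "jump_time A X0 tau n < ?s" using birth_jump(1)[OF g' m] .
  moreover have "?b ?s \<noteq> ?b (jump_time A X0 tau n)" using birth_jump(3)[OF g' m, of ?s] m by simp
  ultimately have "jump_time A X0 tau (Suc n) \<le> ?s"
    using bA by (simp only: jump_time.simps) (rule Inf_lower, blast)
  also have "\<dots> < Expl (X0 b) (\<lambda>l. tau (b, l))" using Ex_jump[OF g' m] .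
  finally show ?case .
qed

lemma D1_final:
  assumes g: "\<forall>k\<ge>X0 b. 0 < tau (b, k)" and bA: "b \<in> {1..A}"
    and le: "Expl (X0 b) (\<lambda>l. tau (b, l)) \<le> ennreal (tau (i, X0 i))"
  shows "urn_final A X0 tau i = enat (X0 i)"
proof -
  have "\<forall>n. jump_time A X0 tau n < Expl (X0 b) (\<lambda>l. tau (b, l))"
    using D1[of X0 b tau A] g bA by blast
  then show ?thesis unfolding urn_final_eq_iff using le by (meson less_le_trans)
qed

lemma D2_step:
  assumes A1: "1 \<le> A" and g: "\<forall>j\<in>{1..A}. \<forall>k\<ge>X0 j. 0 < tau (j,k)"
    and lt: "\<forall>j\<in>{1..A}. jump_time A X0 tau n < Expl (X0 j) (\<lambda>l. tau (j,l))"
  shows "\<exists>j\<in>{1..A}. birth (X0 j) (\<lambda>l. tau (j,l)) (jump_time A X0 tau (Suc n))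
                   \<noteq> birth (X0 j) (\<lambda>l. tau (j,l)) (jump_time A X0 tau n)"
proof -
  define t where "t = jump_time A X0 tau n"
  define bj where "bj j = birth (X0 j) (\<lambda>l. tau (j,l))" for j
  define m where "m j = the_enat (bj j t)" for j
  have bm: "bj j t = enat (m j)" if "j \<in> {1..A}" for j
    using birth_finite[OF lt[rule_format, OF that]] by (auto simp: m_def bj_def t_def)
  define c where "c j = ennreal (\<Sum>l=X0 j..m j. tau (j,l))" for j
  define u where "u = Min (c ` {1..A})"
  have fin: "finite (c ` {1..A})" "c ` {1..A} \<noteq> {}" using A1 by auto
  obtain js where js: "js \<in> {1..A}" "c js = u" using Min_in[OF fin] unfolding u_def by auto
  have gj: "\<forall>k\<ge>X0 j. 0 < (\<lambda>l. tau (j,l)) k" if "j \<in> {1..A}" for j using g that by auto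
  have tc: "t < c j" if "j\<in>{1..A}" for j
    using birth_jump(1)[OF gj[OF that] bm[OF that, unfolded bj_def]] by (simp add: c_def)
  have tu: "t < u" unfolding u_def using fin tc by (simp add: Min_gr_iff)
  have ujs: "bj js u \<noteq> bj js t"
    using birth_jump(3)[OF gj[OF js(1)] bm[OF js(1), unfolded bj_def], of u] js bm[OF js(1)]
    by (simp add: c_def bj_def)
  let ?X = "{t'. t < t' \<and> (\<exists>i\<in>{1..A}. bj i t' \<noteq> bj i t)}"
  have jt: "jump_time A X0 tau (Suc n) = Inf ?X" by (simp add: t_def bj_def)
  have "Inf ?X \<le> u" using tu ujs js by (intro Inf_lower) auto
  moreover have "u \<le> Inf ?X"
  proof (rule Inf_greatest)
    fix t' assume "t' \<in> ?X"
    then obtain j where j: "j \<in> {1..A}" "t < t'" "bj j t' \<noteq> bj j t" by auto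
    have "c j \<le> t'"
    proof (rule ccontr)
      assume "\<not> c j \<le> t'"
      then have "t' < c j" by simp
      then have "bj j t' = enat (m j)"
        using birth_jump(2)[OF gj[OF j(1)] bm[OF j(1), unfolded bj_def], of t'] j(2)
        by (simp add: c_def bj_def)
      then show False using j(3) bm[OF j(1)] by simp
    qed
    moreover have "u \<le> c j" unfolding u_def using fin j(1) by simp
    ultimately show "u \<le> t'" by simp
  qed
  ultimately have "jump_time A X0 tau (Suc n) = u" using jt by simp
  then show ?thesis using js ujs by (auto simp: bj_def t_def)
qed

lemma D2:
  assumes i: "i \<in> {1..A}" and g: "\<forall>j\<in>{1..A}. \<forall>k\<ge>X0 j. 0 < tau (j,k)"
    and lt: "\<forall>j\<in>{1..A}. ennreal (tau (i, X0 i)) < Expl (X0 j) (\<lambda>l. tau (j,l))"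
  shows "urn_final A X0 tau i \<noteq> enat (X0 i)"
proof
  assume "urn_final A X0 tau i = enat (X0 i)"
  then have all: "\<forall>n. jump_time A X0 tau n < ennreal (tau (i, X0 i))" by (simp add: urn_final_eq_iff)
  define s where "s = ennreal (tau (i, X0 i))"
  define jt where "jt = jump_time A X0 tau"
  define bj where "bj j = birth (X0 j) (\<lambda>l. tau (j,l))" for j
  have ltn: "\<forall>j\<in>{1..A}. jump_time A X0 tau n < Expl (X0 j) (\<lambda>l. tau (j,l))" for n
    using all lt by (meson less_trans)
  define P where "P n = (\<Sum>j\<in>{1..A}. the_enat (bj j (jt n)))" for n
  have fin: "bj j (jt n) = enat (the_enat (bj j (jt n)))" if jA: "j\<in>{1..A}" for j n
  proof -
    obtain m where "bj j (jt n) = enat m"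
      using birth_finite[OF ltn[rule_format, OF jA, of n]] by (auto simp: bj_def jt_def)
    then show ?thesis by simp
  qed
  have finS: "bj j s = enat (the_enat (bj j s))" if "j\<in>{1..A}" for j
    using birth_finite[OF lt[rule_format, OF that]] by (auto simp: bj_def s_def)
  have A1: "1 \<le> A" using i by simp
  have step: "P n < P (Suc n)" for n
  proof -
    have "\<exists>j\<in>{1..A}. bj j (jt (Suc n)) \<noteq> bj j (jt n)"
      unfolding bj_def jt_def by (rule D2_step[OF A1 g ltn])
    then obtain j where j: "j\<in>{1..A}" "bj j (jt (Suc n)) \<noteq> bj j (jt n)" by blast
    have le: "the_enat (bj j' (jt n)) \<le> the_enat (bj j' (jt (Suc n)))" if "j' \<in> {1..A}" for j'
    proof -
      have "bj j' (jt n) \<le> bj j' (jt (Suc n))" unfolding bj_def jt_def by (rule birth_mono[OF jump_time_Suc_ge])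
      then show ?thesis using fin[OF that, of n] fin[OF that, of "Suc n"] by (metis enat_ord_simps(1))
    qed
    have "the_enat (bj j (jt n)) \<noteq> the_enat (bj j (jt (Suc n)))"
      using j(2) fin[OF j(1), of n] fin[OF j(1), of "Suc n"] by metis
    then have "the_enat (bj j (jt n)) < the_enat (bj j (jt (Suc n)))" using le[OF j(1)] by simp
    then show ?thesis unfolding P_def
      by (intro sum_strict_mono_ex1) (use le j in auto)
  qed
  have ge: "n \<le> P n" for n
  proof (induction n)
    case (Suc n) then show ?case using step[of n] by simp
  qed simp
  have bd: "P n \<le> (\<Sum>j\<in>{1..A}. the_enat (bj j s))" for n
    unfolding P_def
  proof (rule sum_mono)
    fix j assume j: "j \<in> {1..A}"
    have "bj j (jt n) \<le> bj j s" using all by (simp add: bj_def jt_def s_def birth_mono less_imp_le)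
    then show "the_enat (bj j (jt n)) \<le> the_enat (bj j s)"
      using fin[OF j, of n] finS[OF j] by (metis enat_ord_simps(1))
  qed
  show False using ge[of "Suc (\<Sum>j\<in>{1..A}. the_enat (bj j s))"] bd[of "Suc (\<Sum>j\<in>{1..A}. the_enat (bj j s))"]
    by simp
qed

lemma enat_neq_iff_le: "(x::enat) \<noteq> y \<longleftrightarrow> (\<exists>m. \<not> (x \<le> enat m \<longleftrightarrow> y \<le> enat m))"
proof
  assume "x \<noteq> y"
  then consider "x < y" | "y < x" by (meson linorder_neqE)
  then show "\<exists>m. \<not> (x \<le> enat m \<longleftrightarrow> y \<le> enat m)"
  proof cases
    case 1 then obtain m where "x = enat m" by (cases x) auto
    then show ?thesis using 1 by (intro exI[of _ m]) auto
  next
    case 2 then obtain m where "y = enat m" by (cases y) auto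
    then show ?thesis using 2 by (intro exI[of _ m]) auto
  qed
qed auto

lemma jt_Suc_less_iff:
  "jump_time A X0 tau (Suc n) < c \<longleftrightarrow>
   (\<exists>r::rat. ennreal (real_of_rat r) < c \<and> jump_time A X0 tau n < ennreal (real_of_rat r) \<and>
     (\<exists>i\<in>{1..A}. birth (X0 i) (\<lambda>l. tau (i,l)) (ennreal (real_of_rat r))
                \<noteq> birth (X0 i) (\<lambda>l. tau (i,l)) (jump_time A X0 tau n)))"
  (is "?L \<longleftrightarrow> ?R")
proof
  let ?t = "jump_time A X0 tau n"
  assume ?L
  then obtain t where t: "?t < t" "t < c" and i: "\<exists>i\<in>{1..A}. birth (X0 i) (\<lambda>l. tau (i,l)) t
                \<noteq> birth (X0 i) (\<lambda>l. tau (i,l)) ?t"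
    by (auto simp: Inf_less_iff)
  obtain r :: rat where r: "t < ennreal (real_of_rat r)" "ennreal (real_of_rat r) < c"
    using ennreal_rat_dense[OF t(2)] by blast
  from i obtain i where i: "i \<in> {1..A}" "birth (X0 i) (\<lambda>l. tau (i,l)) t \<noteq> birth (X0 i) (\<lambda>l. tau (i,l)) ?t"
    by blast
  have m1: "birth (X0 i) (\<lambda>l. tau (i,l)) ?t \<le> birth (X0 i) (\<lambda>l. tau (i,l)) t"
    using t(1) by (intro birth_mono) simp
  have m2: "birth (X0 i) (\<lambda>l. tau (i,l)) t \<le> birth (X0 i) (\<lambda>l. tau (i,l)) (ennreal (real_of_rat r))"
    using r(1) by (intro birth_mono) simp
  have "birth (X0 i) (\<lambda>l. tau (i,l)) (ennreal (real_of_rat r)) \<noteq> birth (X0 i) (\<lambda>l. tau (i,l)) ?t"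
    using m1 m2 i(2) by auto
  then show ?R using r t i(1) by (intro exI[of _ r]) auto
next
  assume ?R
  then obtain r :: rat where r: "ennreal (real_of_rat r) < c" "jump_time A X0 tau n < ennreal (real_of_rat r)"
     "\<exists>i\<in>{1..A}. birth (X0 i) (\<lambda>l. tau (i,l)) (ennreal (real_of_rat r))
                \<noteq> birth (X0 i) (\<lambda>l. tau (i,l)) (jump_time A X0 tau n)" by blast
  have "jump_time A X0 tau (Suc n) \<le> ennreal (real_of_rat r)"
    by (simp only: jump_time.simps) (rule Inf_lower, use r in blast)
  then show ?L using r(1) by simp
qed

lemma ex_le_atMost: "(\<exists>j\<le>m. P j) \<longleftrightarrow> (\<exists>j\<in>{..m::nat}. P j)" by auto

lemma jump_time_measurable:
  assumes coord: "\<And>i l. (\<lambda>\<omega>. \<omega> (i,l)) \<in> borel_measurable M"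
  shows "(\<lambda>\<omega>. jump_time A X0 \<omega> n) \<in> borel_measurable M"
proof (induction n)
  case 0 then show ?case by simp
next
  case (Suc n)
  note [measurable] = coord Suc.IH
  show ?case
  proof (rule borel_measurableI_less)
    fix c :: ennreal
    have "{\<omega> \<in> space M. jump_time A X0 \<omega> (Suc n) < c} =
      {\<omega> \<in> space M. \<exists>r::rat. ennreal (real_of_rat r) < c \<and> jump_time A X0 \<omega> n < ennreal (real_of_rat r) \<and>
        (\<exists>i\<in>{1..A}. \<exists>m. \<not> ((\<exists>j\<in>{..m}. ennreal (real_of_rat r) < ennreal (\<Sum>l=X0 i..j. \<omega> (i,l)))
               \<longleftrightarrow> (\<exists>j\<in>{..m}. jump_time A X0 \<omega> n < ennreal (\<Sum>l=X0 i..j. \<omega> (i,l)))))}"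
      unfolding jt_Suc_less_iff enat_neq_iff_le birth_le_iff by (simp only: ex_le_atMost)
    also have "\<dots> \<in> sets M" by measurable
    finally show "{\<omega> \<in> space M. jump_time A X0 \<omega> (Suc n) < c} \<in> sets M" .
  qed
qed

locale setting =
  fixes F :: "nat \<Rightarrow> nat \<Rightarrow> real" and X0 :: "nat \<Rightarrow> nat"
  assumes F_pos: "\<forall>i\<ge>1. \<forall>k\<ge>1. 0 < F i k" and X0_pos: "\<forall>i\<ge>1. 1 \<le> X0 i"
begin

definition Mc :: "nat \<times> nat \<Rightarrow> real measure" where
  "Mc = (\<lambda>(i, k). if 1 \<le> i \<and> X0 i \<le> k then density lborel (exponential_density (F i k))
     else return borel 0)"

lemma M_eq: "sojourn_law F X0 = PiM UNIV Mc"
  by (simp add: sojourn_law_def Mc_def)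

lemma F_pos': "1 \<le> i \<Longrightarrow> X0 i \<le> k \<Longrightarrow> 0 < F i k"
  using F_pos X0_pos by (meson order_trans)

lemma prob_Mc: "prob_space (Mc x)"
proof (cases x)
  case (Pair i k)
  then show ?thesis
    by (auto simp: Mc_def F_pos' intro: prob_space_exponential_density prob_space_return)
qed

lemma sets_Mc: "sets (Mc x) = sets borel"
  by (cases x) (auto simp: Mc_def)

lemma space_Mc: "space (Mc x) = UNIV"
  using sets_eq_imp_space_eq[OF sets_Mc[of x]] by simp

lemma PS: "product_prob_space Mc"
proof -
  interpret prob_space "Mc x" for x by (rule prob_Mc)
  show ?thesis by unfold_locales
qed

end

sublocale setting \<subseteq> prob_space "sojourn_law F X0"
  unfolding M_eq by (rule prob_space_PiM) (rule prob_Mc)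

context setting begin

abbreviation "M \<equiv> sojourn_law F X0"

lemma space_M: "space M = UNIV"
  by (simp add: M_eq space_PiM space_Mc)


lemma coord_meas_Mc: "(\<lambda>\<omega>. \<omega> x) \<in> measurable M (Mc x)"
  unfolding M_eq by (rule measurable_component_singleton) simp

lemma coord_meas[measurable]: "(\<lambda>\<omega>. \<omega> x) \<in> borel_measurable M"
  using coord_meas_Mc[of x] by (simp add: measurable_cong_sets[OF refl sets_Mc])

lemma emeasure_coord:
  assumes "A \<in> sets borel"
  shows "emeasure M {\<omega> \<in> space M. \<omega> x \<in> A} = emeasure (Mc x) A"
  unfolding M_eq
  by (rule product_prob_space.emeasure_PiM_Collect_single[OF PS]) (use assms sets_Mc in auto)

lemma coord_dist:
  assumes ik: "1 \<le> i" "X0 i \<le> k"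
  shows "distributed M lborel (\<lambda>\<omega>. \<omega> (i,k)) (exponential_density (F i k))"
  unfolding distributed_def
proof (intro conjI)
  show "distr M lborel (\<lambda>\<omega>. \<omega> (i, k)) = density lborel (exponential_density (F i k))"
  proof (rule measure_eqI)
    fix A assume A: "A \<in> sets (distr M lborel (\<lambda>\<omega>. \<omega> (i, k)))"
    then have A': "A \<in> sets borel" by simp
    have "emeasure (distr M lborel (\<lambda>\<omega>. \<omega> (i, k))) A = emeasure M ((\<lambda>\<omega>. \<omega> (i, k)) -` A \<inter> space M)"
      using A' by (intro emeasure_distr) simp_all
    also have "\<dots> = emeasure M {\<omega> \<in> space M. \<omega> (i,k) \<in> A}" by (intro arg_cong[where f="emeasure M"]) auto
    also have "\<dots> = emeasure (Mc (i,k)) A" by (rule emeasure_coord[OF A'])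
    also have "\<dots> = emeasure (density lborel (exponential_density (F i k))) A"
      using ik by (simp add: Mc_def)
    finally show "emeasure (distr M lborel (\<lambda>\<omega>. \<omega> (i, k))) A = emeasure (density lborel (exponential_density (F i k))) A" .
  qed simp
qed simp_all

lemma prob_coord_le:
  assumes ik: "1 \<le> i" "X0 i \<le> k" and a: "0 \<le> a"
  shows "prob {\<omega> \<in> space M. \<omega> (i,k) \<le> a} = 1 - exp (- a * F i k)"
  using exponential_distributedD_le[OF coord_dist[OF ik] a F_pos'[OF ik]] by simp

lemma prob_coord_gt:
  assumes ik: "1 \<le> i" "X0 i \<le> k" and a: "0 \<le> a"
  shows "prob {\<omega> \<in> space M. a < \<omega> (i,k)} = exp (- a * F i k)"
  using exponential_distributedD_gt[OF coord_dist[OF ik] a F_pos'[OF ik]] by simp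

lemma AE_coord_pos:
  assumes ik: "1 \<le> i" "X0 i \<le> k"
  shows "AE \<omega> in M. 0 < \<omega> (i,k)"
proof -
  have "prob {\<omega> \<in> space M. 0 < \<omega> (i,k)} = 1" using prob_coord_gt[OF ik, of 0] by simp
  from AE_prob_1[OF this] show ?thesis by (simp add: space_M)
qed

lemma AE_good: "AE \<omega> in M. \<forall>i. \<forall>k. 1 \<le> i \<longrightarrow> X0 i \<le> k \<longrightarrow> 0 < \<omega> (i,k)"
  unfolding AE_all_countable
proof (intro allI)
  fix i k show "AE \<omega> in M. 1 \<le> i \<longrightarrow> X0 i \<le> k \<longrightarrow> 0 < \<omega> (i, k)"
    by (cases "1 \<le> i \<and> X0 i \<le> k") (auto intro: AE_coord_pos)
qed

lemma nn_integral_coord: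
  assumes ik: "1 \<le> i" "X0 i \<le> k"
  shows "(\<integral>\<^sup>+\<omega>. ennreal (\<omega> (i,k)) \<partial>M) = ennreal (1 / F i k)"
proof -
  have d: "distributed M lborel (\<lambda>\<omega>. \<omega> (i,k)) (erlang_density 0 (F i k))"
    using coord_dist[OF ik] .
  have "integrable M (\<lambda>\<omega>. \<omega> (i,k))"
    using erlang_ith_moment_integrable[OF F_pos'[OF ik] d, of 1] by simp
  moreover have "expectation (\<lambda>\<omega>. \<omega> (i,k)) = 1 / F i k"
    using erlang_ith_moment[OF F_pos'[OF ik] d, of 1] by simp
  moreover have "AE \<omega> in M. 0 \<le> \<omega> (i,k)" using AE_coord_pos[OF ik] by eventually_elim simp
  ultimately show ?thesis by (simp add: nn_integral_eq_integral)
qed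


lemma indep_coords: "indep_vars Mc (\<lambda>x \<omega>. \<omega> x) UNIV"
proof (subst indep_vars_iff_distr_eq_PiM)
  show "random_variable (Mc i) (\<lambda>\<omega>. \<omega> i)" for i by (rule coord_meas_Mc)
  have "(\<Pi>\<^sub>M i\<in>UNIV. distr M (Mc i) (\<lambda>\<omega>. \<omega> i)) = (\<Pi>\<^sub>M i\<in>UNIV. Mc i)"
    unfolding M_eq using product_prob_space.PiM_component[OF PS]
    by (intro PiM_cong) auto
  moreover have "distr M (Pi\<^sub>M UNIV Mc) (\<lambda>x. restrict x UNIV) = distr M (Pi\<^sub>M UNIV Mc) (\<lambda>x. x)"
    by (intro distr_cong) (auto simp: restrict_def)
  ultimately show "distr M (Pi\<^sub>M UNIV Mc) (\<lambda>x. \<lambda>i\<in>UNIV. x i) = (\<Pi>\<^sub>M i\<in>UNIV. distr M (Mc i) (\<lambda>\<omega>. \<omega> i))"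
    by (simp add: M_eq)
qed simp

lemma prob_indep_restrict:
  assumes L: "finite L" "L \<noteq> {}" and K: "disjoint_family_on K L"
    and Y: "\<And>l. l \<in> L \<Longrightarrow> Y l \<in> sets (PiM (K l) Mc)"
  shows "prob (\<Inter>l\<in>L. {\<omega> \<in> space M. restrict \<omega> (K l) \<in> Y l})
       = (\<Prod>l\<in>L. prob {\<omega> \<in> space M. restrict \<omega> (K l) \<in> Y l})"
proof -
  have iv: "indep_vars (\<lambda>l. PiM (K l) Mc) (\<lambda>l \<omega>. restrict (\<lambda>i. \<omega> i) (K l)) L"
    by (rule indep_vars_restrict[OF indep_coords _ K]) simp
  have eq: "(\<lambda>\<omega>. restrict (\<lambda>i. \<omega> i) (K l)) -` Y l \<inter> space M = {\<omega> \<in> space M. restrict \<omega> (K l) \<in> Y l}" for l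
    by auto
  show ?thesis
    using indep_varsD_finite[OF iv L(2) L(1) Y] unfolding eq .
qed

lemma meas_PiM_coord[measurable]:
  "x \<in> J \<Longrightarrow> (\<lambda>f. f x) \<in> borel_measurable (PiM J Mc)"
  using measurable_component_singleton[of x J Mc] by (simp add: measurable_cong_sets[OF refl sets_Mc])

lemma Expl_meas[measurable]:
  assumes [measurable]: "\<And>l. (\<lambda>\<omega>. g \<omega> l) \<in> borel_measurable N"
  shows "(\<lambda>\<omega>. Expl x0 (g \<omega>)) \<in> borel_measurable N"
  unfolding Expl_def by measurable

end

context setting begin

lemma box_prob:
  assumes b: "1 \<le> b" and a: "0 \<le> a" and c: "0 < c" and F: "\<forall>l. X0 b \<le> l \<longrightarrow> l \<le> N \<longrightarrow> c \<le> F b l"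
  shows "(1 - exp (- a * c)) ^ N \<le> prob {\<omega> \<in> space M. \<forall>l\<in>{X0 b..N}. \<omega> (b,l) \<le> a}"
proof -
  let ?q = "1 - exp (- a * c)"
  have q0: "0 \<le> ?q" using a c by (simp add: mult_nonneg_nonneg)
  have q1: "?q \<le> 1" by simp
  show ?thesis
  proof (cases "{X0 b..N} = {}")
    case True
    then have "{\<omega> \<in> space M. \<forall>l\<in>{X0 b..N}. \<omega> (b,l) \<le> a} = space M" by auto
    then show ?thesis using q0 q1 by (simp add: power_le_one prob_space)
  next
    case False
    define K where "K l = {(b,l)}" for l :: nat
    define Y where "Y l = {f \<in> space (PiM (K l) Mc). f (b,l) \<le> a}" for l
    have Ysets: "Y l \<in> sets (PiM (K l) Mc)" for l
      unfolding Y_def by (rule borel_measurable_le) (auto simp: K_def)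
    have dj: "disjoint_family_on K {X0 b..N}" by (auto simp: disjoint_family_on_def K_def)
    have eq1: "(\<Inter>l\<in>{X0 b..N}. {\<omega> \<in> space M. restrict \<omega> (K l) \<in> Y l})
        = {\<omega> \<in> space M. \<forall>l\<in>{X0 b..N}. \<omega> (b,l) \<le> a}"
      using False by (auto simp: Y_def K_def space_PiM space_Mc)
    have eq2: "{\<omega> \<in> space M. restrict \<omega> (K l) \<in> Y l} = {\<omega> \<in> space M. \<omega> (b,l) \<le> a}" for l
      by (auto simp: Y_def K_def space_PiM space_Mc)
    have "prob {\<omega> \<in> space M. \<forall>l\<in>{X0 b..N}. \<omega> (b,l) \<le> a} = prob (\<Inter>l\<in>{X0 b..N}. {\<omega> \<in> space M. restrict \<omega> (K l) \<in> Y l})"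
      using eq1 by simp
    also have "\<dots> = (\<Prod>l\<in>{X0 b..N}. prob {\<omega> \<in> space M. restrict \<omega> (K l) \<in> Y l})"
      by (rule prob_indep_restrict) (use False dj Ysets in auto)
    also have "\<dots> = (\<Prod>l\<in>{X0 b..N}. prob {\<omega> \<in> space M. \<omega> (b,l) \<le> a})"
      by (simp only: eq2)
    also have "\<dots> = (\<Prod>l\<in>{X0 b..N}. 1 - exp (- a * F b l))"
      using b a by (intro prod.cong refl prob_coord_le) auto
    finally have eq: "prob {\<omega> \<in> space M. \<forall>l\<in>{X0 b..N}. \<omega> (b,l) \<le> a} = (\<Prod>l\<in>{X0 b..N}. 1 - exp (- a * F b l))" .
    have "(\<Prod>l\<in>{X0 b..N}. ?q) \<le> (\<Prod>l\<in>{X0 b..N}. 1 - exp (- a * F b l))"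
    proof (rule prod_mono)
      fix l assume l: "l \<in> {X0 b..N}"
      then have "c \<le> F b l" using F by auto
      then have "a * c \<le> a * F b l" using a by (rule mult_left_mono)
      then show "0 \<le> ?q \<and> ?q \<le> 1 - exp (- a * F b l)" using q0 by simp
    qed
    moreover have "?q ^ N \<le> (\<Prod>l\<in>{X0 b..N}. ?q)"
    proof -
      have "1 \<le> X0 b" using X0_pos b by simp
      then have "card {X0 b..N} \<le> N" by simp
      then show ?thesis using q0 q1 by (simp add: power_decreasing)
    qed
    ultimately show ?thesis using eq by simp
  qed
qed


lemma tail_prob:
  assumes b: "1 \<le> b" "X0 b \<le> Lb" and e: "0 < e"
    and S: "(\<Sum>i. ennreal (1 / F b (Lb + i))) \<le> ennreal (e/4)"
  shows "1/2 \<le> prob {\<omega> \<in> space M. (\<Sum>i. ennreal (\<omega> (b, Lb + i))) < ennreal (e/2)}"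
proof -
  define tl where "tl \<omega> = (\<Sum>i. ennreal (\<omega> (b, Lb + i)))" for \<omega> :: "nat \<times> nat \<Rightarrow> real"
  have [measurable]: "tl \<in> borel_measurable M" unfolding tl_def by measurable
  have int: "(\<integral>\<^sup>+\<omega>. tl \<omega> \<partial>M) = (\<Sum>i. ennreal (1 / F b (Lb + i)))"
    unfolding tl_def
  proof (subst nn_integral_suminf)
    show "(\<Sum>i. \<integral>\<^sup>+ x. ennreal (x (b, Lb + i)) \<partial>M) = (\<Sum>i. ennreal (1 / F b (Lb + i)))"
      using b by (intro suminf_cong nn_integral_coord) auto
  qed auto
  define c where "c = ennreal (2/e)"
  have "emeasure M {\<omega> \<in> space M. 1 \<le> c * tl \<omega>} \<le> c * (\<integral>\<^sup>+\<omega>. tl \<omega> * indicator (space M) \<omega> \<partial>M)"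
    by (rule nn_integral_Markov_inequality) auto
  also have "(\<integral>\<^sup>+\<omega>. tl \<omega> * indicator (space M) \<omega> \<partial>M) = (\<integral>\<^sup>+\<omega>. tl \<omega> \<partial>M)"
    by (intro nn_integral_cong) auto
  also have "c * (\<integral>\<^sup>+\<omega>. tl \<omega> \<partial>M) \<le> c * ennreal (e/4)"
    using int S by (intro mult_left_mono) auto
  also have "c * ennreal (e/4) = ennreal (2/e * (e/4))"
    unfolding c_def using e by (subst ennreal_mult) auto
  also have "2/e * (e/4) = 1/2" using e by simp
  finally have m1: "emeasure M {\<omega> \<in> space M. 1 \<le> c * tl \<omega>} \<le> ennreal (1/2)" .
  have sub: "{\<omega> \<in> space M. \<not> tl \<omega> < ennreal (e/2)} \<subseteq> {\<omega> \<in> space M. 1 \<le> c * tl \<omega>}"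
  proof safe
    fix \<omega> assume "\<not> tl \<omega> < ennreal (e/2)"
    then have "ennreal (e/2) \<le> tl \<omega>" by simp
    then have "c * ennreal (e/2) \<le> c * tl \<omega>" by (rule mult_left_mono) simp
    moreover have "c * ennreal (e/2) = ennreal (2/e * (e/2))" unfolding c_def using e by (subst ennreal_mult) auto
    moreover have "2/e * (e/2) = 1" using e by simp
    ultimately show "1 \<le> c * tl \<omega>" by simp
  qed
  have s2: "{\<omega> \<in> space M. 1 \<le> c * tl \<omega>} \<in> sets M" by measurable
  have "emeasure M {\<omega> \<in> space M. \<not> tl \<omega> < ennreal (e/2)} \<le> ennreal (1/2)"
    using emeasure_mono[OF sub s2] m1 by (rule order_trans)
  then have "ennreal (prob {\<omega> \<in> space M. \<not> tl \<omega> < ennreal (e/2)}) \<le> ennreal (1/2)"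
    by (simp only: emeasure_eq_measure)
  then have p1: "prob {\<omega> \<in> space M. \<not> tl \<omega> < ennreal (e/2)} \<le> 1/2"
    by (rule ennreal_le_iff[THEN iffD1, rotated]) simp
  have s3: "{\<omega> \<in> space M. tl \<omega> < ennreal (e/2)} \<in> events" by measurable
  have "{\<omega> \<in> space M. \<not> tl \<omega> < ennreal (e/2)} = space M - {\<omega> \<in> space M. tl \<omega> < ennreal (e/2)}"
    by auto
  then have "prob {\<omega> \<in> space M. \<not> tl \<omega> < ennreal (e/2)} = 1 - prob {\<omega> \<in> space M. tl \<omega> < ennreal (e/2)}"
    using prob_compl[OF s3] by simp
  then show ?thesis using p1 unfolding tl_def by simp
qed


lemma box_tail_indep:
  assumes NL: "N < Lb"
  shows "prob ({\<omega>\<in>space M. \<forall>l\<in>{X0 b..N}. \<omega> (b,l) \<le> a} \<inter> {\<omega>\<in>space M. (\<Sum>i. ennreal (\<omega> (b, Lb + i))) < e'})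
       = prob {\<omega>\<in>space M. \<forall>l\<in>{X0 b..N}. \<omega> (b,l) \<le> a} * prob {\<omega>\<in>space M. (\<Sum>i. ennreal (\<omega> (b, Lb + i))) < e'}"
proof -
  define K where "K l = (if l = (0::nat) then {b} \<times> {X0 b..N} else {b} \<times> {Lb..})" for l
  define Y where "Y l = (if l = (0::nat) then {f\<in>space (PiM (K 0) Mc). \<forall>l\<in>{X0 b..N}. f (b,l) \<le> a}
     else {f\<in>space (PiM (K 1) Mc). (\<Sum>i. ennreal (f (b, Lb + i))) < e'})" for l
  have Y0: "Y 0 \<in> sets (PiM (K 0) Mc)"
    unfolding Y_def
    by (simp, intro sets.sets_Collect_finite_All borel_measurable_le meas_PiM_coord measurable_const)
       (auto simp: K_def)
  have [measurable]: "(\<lambda>f. f (b, Lb + i)) \<in> borel_measurable (PiM ({b} \<times> {Lb..}) Mc)" for i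
    by (rule meas_PiM_coord) simp
  have Y1: "Y 1 \<in> sets (PiM (K 1) Mc)"
    unfolding Y_def K_def by simp measurable
  have Ys: "Y l \<in> sets (PiM (K l) Mc)" if "l \<in> {0,1}" for l
    using that Y0 Y1 by auto
  have dj: "disjoint_family_on K {0,1}"
    using NL by (auto simp: disjoint_family_on_def K_def)
  have e0: "{\<omega> \<in> space M. restrict \<omega> (K 0) \<in> Y 0} = {\<omega>\<in>space M. \<forall>l\<in>{X0 b..N}. \<omega> (b,l) \<le> a}"
    by (auto simp: Y_def K_def space_PiM space_Mc)
  have e1: "{\<omega> \<in> space M. restrict \<omega> (K (Suc 0)) \<in> Y (Suc 0)} = {\<omega>\<in>space M. (\<Sum>i. ennreal (\<omega> (b, Lb + i))) < e'}"
    by (auto simp: Y_def K_def space_PiM space_Mc)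
  have "prob (\<Inter>l\<in>{0,1}. {\<omega> \<in> space M. restrict \<omega> (K l) \<in> Y l})
      = (\<Prod>l\<in>{0,1}. prob {\<omega> \<in> space M. restrict \<omega> (K l) \<in> Y l})"
    by (rule prob_indep_restrict) (use dj Ys in auto)
  then show ?thesis by (simp add: e0 e1)
qed

lemma Expl_bound:
  fixes tau :: "nat \<Rightarrow> real"
  assumes g: "\<forall>k\<ge>x0. 0 < tau k" and x0: "1 \<le> x0" and Lb: "Lb = max (Suc N) x0"
    and box: "\<forall>l\<in>{x0..N}. tau l \<le> a" and a: "0 \<le> a" and Na: "real N * a \<le> e/2" and e: "0 < e"
    and tl: "(\<Sum>i. ennreal (tau (Lb + i))) < ennreal (e/2)"
  shows "Expl x0 tau < ennreal e"
proof -
  let ?tl = "(\<Sum>i. ennreal (tau (Lb + i)))"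
  have each: "ennreal (\<Sum>l=x0..k. tau l) \<le> ennreal (e/2) + ?tl" for k
  proof -
    define S1 where "S1 = {l\<in>{x0..k}. l \<le> N}"
    define S2 where "S2 = {l\<in>{x0..k}. \<not> l \<le> N}"
    have "(\<Sum>l=x0..k. tau l) = sum tau (S1 \<union> S2)"
      by (rule sum.cong) (auto simp: S1_def S2_def)
    also have "\<dots> = sum tau S1 + sum tau S2"
      by (rule sum.union_disjoint) (auto simp: S1_def S2_def)
    finally have split: "(\<Sum>l=x0..k. tau l) = sum tau S1 + sum tau S2" .
    have nn: "0 \<le> tau l" if "l \<in> {x0..k}" for l using g that by (auto intro: less_imp_le)
    have h1: "sum tau S1 \<le> e/2"
    proof -
      have "sum tau S1 \<le> sum tau {x0..N}"
        by (rule sum_mono2) (use g in \<open>auto simp: S1_def intro: less_imp_le\<close>)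
      also have "\<dots> \<le> of_nat (card {x0..N}) * a"
        by (rule sum_bounded_above) (use box in auto)
      also have "\<dots> \<le> real N * a"
        using x0 a by (intro mult_right_mono) auto
      finally show ?thesis using Na by simp
    qed
    have S1nn: "0 \<le> sum tau S1" using nn by (intro sum_nonneg) (auto simp: S1_def)
    have S2nn: "0 \<le> sum tau S2" using nn by (intro sum_nonneg) (auto simp: S2_def)
    have h2: "ennreal (sum tau S2) \<le> ?tl"
    proof -
      have "ennreal (sum tau S2) = (\<Sum>l\<in>S2. ennreal (tau l))"
        using nn by (subst sum_ennreal) (auto simp: S2_def)
      also have "\<dots> \<le> (\<Sum>l\<in>{0 + Lb..<Suc k + Lb}. ennreal (tau l))"
        by (rule sum_mono2) (auto simp: S2_def Lb)
      also have "\<dots> = (\<Sum>i\<in>{0..<Suc k}. ennreal (tau (i + Lb)))"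
        by (rule sum.shift_bounds_nat_ivl)
      also have "\<dots> = (\<Sum>i\<in>{0..<Suc k}. ennreal (tau (Lb + i)))"
        by (simp add: add.commute)
      also have "\<dots> \<le> ?tl"
        by (rule sum_le_suminf[OF summableI]) auto
      finally show ?thesis .
    qed
    have "ennreal (\<Sum>l=x0..k. tau l) = ennreal (sum tau S1) + ennreal (sum tau S2)"
      unfolding split using S1nn S2nn by simp
    also have "\<dots> \<le> ennreal (e/2) + ?tl"
      using h1 h2 by (intro add_mono ennreal_leI) auto
    finally show ?thesis .
  qed
  have "Expl x0 tau \<le> ennreal (e/2) + ?tl"
    unfolding Expl_def by (rule SUP_least) (use each in auto)
  also have "\<dots> < ennreal (e/2) + ennreal (e/2)"
    using tl by (subst ennreal_add_left_cancel_less) auto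
  also have "\<dots> = ennreal e" using e by (subst ennreal_plus[symmetric]) auto
  finally show ?thesis .
qed


lemma uniform_pos:
  assumes B_sub: "B \<subseteq> {1..}" and Bne: "B \<noteq> {}"
    and B_sum: "(\<Sum>k. (SUP i\<in>B. ennreal (1 / F i (Suc k)))) < \<infinity>"
    and eps: "0 < \<epsilon>"
  shows "\<exists>p>0. \<forall>b\<in>B. p \<le> prob {\<omega> \<in> space M. Expl (X0 b) (\<lambda>l. \<omega> (b,l)) < ennreal \<epsilon>}"
proof -
  define s where "s k = (SUP i\<in>B. ennreal (1 / F i (Suc k)))" for k
  have Bs: "(\<Sum>k. s k) < \<infinity>" using B_sum by (simp add: s_def)
  have s_lt: "s k < \<infinity>" for k using ennreal_suminf_lessD[OF Bs] .
  define r where "r k = enn2real (s k)" for k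
  have s_r: "s k = ennreal (r k)" for k using s_lt[of k] by (simp add: r_def less_top[symmetric])
  have r_nn: "0 \<le> r k" for k by (simp add: r_def)
  have sumr: "summable r"
    by (rule summable_suminf_not_top[OF r_nn]) (use Bs s_r in auto)
  define C where "C = suminf r"
  have rC: "r k \<le> C" for k unfolding C_def using sum_le_suminf[OF sumr, of "{k}"] r_nn by auto
  have Flev: "1 / F i (Suc k) \<le> r k" if "i \<in> B" for i k
  proof -
    have "ennreal (1 / F i (Suc k)) \<le> s k" unfolding s_def using that by (rule SUP_upper)
    then show ?thesis unfolding s_r using r_nn by simp
  qed
  have Fpos: "0 < F i l" if "i \<in> B" "1 \<le> l" for i l using F_pos B_sub that by auto
  obtain b0 where b0: "b0 \<in> B" using Bne by auto
  have "0 < 1 / F b0 (Suc 0)" using Fpos[OF b0] by simp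
  also have "\<dots> \<le> r 0" using Flev[OF b0, of 0] by simp
  also have "\<dots> \<le> C" by (rule rC)
  finally have Cpos: "0 < C" .
  have Flb: "1 / C \<le> F i l" if "i \<in> B" "1 \<le> l" for i l
  proof -
    have "1 / F i (Suc (l - 1)) \<le> C" using Flev[OF that(1), of "l - 1"] rC[of "l - 1"] by simp
    then have "1 / F i l \<le> C" using that by simp
    then show ?thesis using Fpos[OF that] Cpos by (simp add: field_simps)
  qed
  obtain N where N: "\<forall>n\<ge>N. norm (\<Sum>i. r (i + n)) < \<epsilon>/4"
    using suminf_exist_split[OF _ sumr, of "\<epsilon>/4"] eps by auto
  define a where "a = \<epsilon> / (2 * (real N + 1))"
  have a_pos: "0 < a" using eps by (simp add: a_def)
  have Na: "real N * a \<le> \<epsilon>/2"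
  proof -
    have "real N * a = (\<epsilon>/2) * (real N / (real N + 1))" by (simp add: a_def field_simps)
    also have "\<dots> \<le> (\<epsilon>/2) * 1" using eps by (intro mult_left_mono) auto
    finally show ?thesis by simp
  qed
  define q where "q = 1 - exp (- a * (1/C))"
  have q_pos: "0 < q" using a_pos Cpos by (simp add: q_def)
  define p where "p = q ^ N / 2"
  show ?thesis
  proof (intro exI[of _ p] conjI ballI)
    show "0 < p" using q_pos by (simp add: p_def)
    fix b assume bB: "b \<in> B"
    have b1: "1 \<le> b" using bB B_sub by auto
    have x0b: "1 \<le> X0 b" using X0_pos b1 by auto
    define Lb where "Lb = max (Suc N) (X0 b)"
    define box where "box = {\<omega>\<in>space M. \<forall>l\<in>{X0 b..N}. \<omega> (b,l) \<le> a}"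
    define T where "T = {\<omega>\<in>space M. (\<Sum>i. ennreal (\<omega> (b, Lb + i))) < ennreal (\<epsilon>/2)}"
    have P1: "q^N \<le> prob box" unfolding box_def q_def
      by (rule box_prob) (use b1 a_pos Cpos Flb bB x0b in auto)
    have tailS: "(\<Sum>i. ennreal (1 / F b (Lb + i))) \<le> ennreal (\<epsilon>/4)"
    proof -
      have "(\<Sum>i. ennreal (1 / F b (Lb + i))) \<le> (\<Sum>i. ennreal (r (i + (Lb - 1))))"
      proof (rule suminf_le)
        fix i
        have "Lb + i = Suc (i + (Lb - 1))" by (simp add: Lb_def)
        then show "ennreal (1 / F b (Lb + i)) \<le> ennreal (r (i + (Lb - 1)))"
          using Flev[OF bB, of "i + (Lb - 1)"] by (intro ennreal_leI) (simp add: add.commute)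
      qed auto
      also have "\<dots> = ennreal (\<Sum>i. r (i + (Lb - 1)))"
        by (rule suminf_ennreal2) (use r_nn summable_ignore_initial_segment[OF sumr] in auto)
      also have "\<dots> \<le> ennreal (\<epsilon>/4)"
      proof (rule ennreal_leI)
        have "N \<le> Lb - 1" by (simp add: Lb_def)
        then have "norm (\<Sum>i. r (i + (Lb - 1))) < \<epsilon>/4" using N by blast
        then show "(\<Sum>i. r (i + (Lb - 1))) \<le> \<epsilon>/4" by simp
      qed
      finally show ?thesis .
    qed
    have P2: "1/2 \<le> prob T" unfolding T_def
      by (rule tail_prob) (use b1 tailS eps in \<open>auto simp: Lb_def\<close>)
    have P3: "prob (box \<inter> T) = prob box * prob T" unfolding box_def T_def
      by (rule box_tail_indep) (simp add: Lb_def)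
    have sub: "AE \<omega> in M. \<omega> \<in> box \<inter> T \<longrightarrow> \<omega> \<in> {\<omega> \<in> space M. Expl (X0 b) (\<lambda>l. \<omega> (b,l)) < ennreal \<epsilon>}"
      using AE_good
    proof eventually_elim
      case (elim \<omega>)
      show ?case
      proof
        assume w: "\<omega> \<in> box \<inter> T"
        have "Expl (X0 b) (\<lambda>l. \<omega> (b,l)) < ennreal \<epsilon>"
          by (rule Expl_bound[where N=N and Lb=Lb and a=a])
             (use elim w b1 x0b a_pos Na eps in \<open>auto simp: box_def T_def Lb_def\<close>)
        then show "\<omega> \<in> {\<omega> \<in> space M. Expl (X0 b) (\<lambda>l. \<omega> (b,l)) < ennreal \<epsilon>}"
          by (simp add: space_M)
      qed
    qed
    have "prob (box \<inter> T) \<le> prob {\<omega> \<in> space M. Expl (X0 b) (\<lambda>l. \<omega> (b,l)) < ennreal \<epsilon>}"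
      by (rule finite_measure_mono_AE[OF sub]) measurable
    moreover have "p \<le> prob box * prob T"
    proof -
      have "q^N * (1/2) \<le> prob box * prob T" by (rule mult_mono) (use P1 P2 in auto)
      then show ?thesis by (simp add: p_def)
    qed
    ultimately show "p \<le> prob {\<omega> \<in> space M. Expl (X0 b) (\<lambda>l. \<omega> (b,l)) < ennreal \<epsilon>}"
      using P3 by simp
  qed
qed


lemma meas_row_coord[measurable]: "(\<lambda>f. f (b,l)) \<in> borel_measurable (PiM ({b} \<times> UNIV) Mc)"
  by (rule meas_PiM_coord) simp

lemma card_to_inf:
  assumes B_sub: "B \<subseteq> {1..}" and B_inf: "infinite B"
  shows "filterlim (\<lambda>A. card (B \<inter> {1..A})) at_top sequentially"
  unfolding filterlim_at_top
proof
  fix n :: nat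
  obtain D where D: "D \<subseteq> B" "finite D" "card D = n" using infinite_arbitrarily_large[OF B_inf] by blast
  have "card (B \<inter> {1..A}) \<ge> n" if "A \<ge> Max (insert 0 D)" for A
  proof -
    have "D \<subseteq> B \<inter> {1..A}"
    proof
      fix x assume x: "x \<in> D"
      then have "x \<le> Max (insert 0 D)" using D(2) by simp
      then show "x \<in> B \<inter> {1..A}" using x D(1) B_sub that by auto
    qed
    then show ?thesis using card_mono[of "B \<inter> {1..A}" D] D by simp
  qed
  then show "\<forall>\<^sub>F A in sequentially. n \<le> card (B \<inter> {1..A})"
    unfolding eventually_sequentially by blast
qed

lemma all_big_to_0:
  assumes B_sub: "B \<subseteq> {1..}" and B_inf: "infinite B"
    and B_sum: "(\<Sum>k. (SUP i\<in>B. ennreal (1 / F i (Suc k)))) < \<infinity>"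
    and eps: "0 < \<epsilon>"
  shows "(\<lambda>A. prob {\<omega>\<in>space M. \<forall>b\<in>B\<inter>{1..A}. ennreal \<epsilon> \<le> Expl (X0 b) (\<lambda>l. \<omega> (b,l))}) \<longlonglongrightarrow> 0"
proof -
  have Bne: "B \<noteq> {}" using B_inf by auto
  obtain p where p: "0 < p" "\<forall>b\<in>B. p \<le> prob {\<omega> \<in> space M. Expl (X0 b) (\<lambda>l. \<omega> (b,l)) < ennreal \<epsilon>}"
    using uniform_pos[OF B_sub Bne B_sum eps] by blast
  have p1: "p \<le> 1"
  proof -
    obtain b where "b \<in> B" using Bne by auto
    then show ?thesis using p(2) prob_le_1 by (meson order_trans)
  qed
  define E where "E b = {\<omega>\<in>space M. ennreal \<epsilon> \<le> Expl (X0 b) (\<lambda>l. \<omega> (b,l))}" for b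
  have PE: "prob (E b) \<le> 1 - p" if "b \<in> B" for b
  proof -
    have s: "{\<omega> \<in> space M. Expl (X0 b) (\<lambda>l. \<omega> (b,l)) < ennreal \<epsilon>} \<in> events" by measurable
    have "E b = space M - {\<omega> \<in> space M. Expl (X0 b) (\<lambda>l. \<omega> (b,l)) < ennreal \<epsilon>}"
      by (auto simp: E_def)
    then have "prob (E b) = 1 - prob {\<omega> \<in> space M. Expl (X0 b) (\<lambda>l. \<omega> (b,l)) < ennreal \<epsilon>}"
      using prob_compl[OF s] by simp
    then show ?thesis using p(2) that by auto
  qed
  define K where "K b = {b} \<times> (UNIV :: nat set)" for b :: nat
  define Y where "Y b = {f \<in> space (PiM (K b) Mc). ennreal \<epsilon> \<le> Expl (X0 b) (\<lambda>l. f (b,l))}" for b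
  have Ys: "Y b \<in> sets (PiM (K b) Mc)" for b unfolding Y_def K_def by measurable
  have dj: "disjoint_family_on K S" for S by (auto simp: disjoint_family_on_def K_def)
  have eqE: "{\<omega> \<in> space M. restrict \<omega> (K b) \<in> Y b} = E b" for b
    by (auto simp: Y_def K_def E_def space_PiM space_Mc)
  have bound: "prob {\<omega>\<in>space M. \<forall>b\<in>B\<inter>{1..A}. ennreal \<epsilon> \<le> Expl (X0 b) (\<lambda>l. \<omega> (b,l))}
      \<le> (1 - p) ^ card (B \<inter> {1..A})" if ne: "B \<inter> {1..A} \<noteq> {}" for A
  proof -
    let ?S = "B \<inter> {1..A}"
    have "{\<omega>\<in>space M. \<forall>b\<in>?S. ennreal \<epsilon> \<le> Expl (X0 b) (\<lambda>l. \<omega> (b,l))} = (\<Inter>b\<in>?S. {\<omega> \<in> space M. restrict \<omega> (K b) \<in> Y b})"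
      using ne unfolding eqE by (auto simp: E_def)
    then have "prob {\<omega>\<in>space M. \<forall>b\<in>?S. ennreal \<epsilon> \<le> Expl (X0 b) (\<lambda>l. \<omega> (b,l))}
        = (\<Prod>b\<in>?S. prob {\<omega> \<in> space M. restrict \<omega> (K b) \<in> Y b})"
      using prob_indep_restrict[of ?S K Y] ne dj Ys by simp
    also have "\<dots> = (\<Prod>b\<in>?S. prob (E b))" unfolding eqE ..
    also have "\<dots> \<le> (\<Prod>b\<in>?S. 1 - p)"
      by (rule prod_mono) (use PE in auto)
    also have "\<dots> = (1 - p) ^ card ?S" by simp
    finally show ?thesis .
  qed
  have lim: "(\<lambda>A. (1 - p) ^ card (B \<inter> {1..A})) \<longlonglongrightarrow> 0"
    by (rule filterlim_compose[OF LIMSEQ_power_zero card_to_inf[OF B_sub B_inf]]) (use p p1 in auto)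
  have ev: "eventually (\<lambda>A. B \<inter> {1..A} \<noteq> {}) sequentially"
  proof -
    have "eventually (\<lambda>A. 1 \<le> card (B \<inter> {1..A})) sequentially"
      using card_to_inf[OF B_sub B_inf] unfolding filterlim_at_top by blast
    then show ?thesis by eventually_elim auto
  qed
  show ?thesis
  proof (rule tendsto_sandwich[OF _ _ tendsto_const lim])
    show "\<forall>\<^sub>F n in sequentially. 0 \<le> prob {\<omega>\<in>space M. \<forall>b\<in>B\<inter>{1..n}. ennreal \<epsilon> \<le> Expl (X0 b) (\<lambda>l. \<omega> (b,l))}"
      by simp
    show "\<forall>\<^sub>F n in sequentially. prob {\<omega>\<in>space M. \<forall>b\<in>B\<inter>{1..n}. ennreal \<epsilon> \<le> Expl (X0 b) (\<lambda>l. \<omega> (b,l))} \<le> (1 - p) ^ card (B \<inter> {1..n})"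
      using ev by eventually_elim (rule bound)
  qed
qed

end

context setting begin

lemma jt_meas[measurable]: "(\<lambda>\<omega>. jump_time A X0 \<omega> n) \<in> borel_measurable M"
  by (rule jump_time_measurable) (rule coord_meas)

lemma stay_sets[measurable]: "{\<omega>\<in>space M. urn_final A X0 \<omega> i = enat (X0 i)} \<in> sets M"
  unfolding urn_final_eq_iff by measurable

lemma good_row: "\<forall>i. \<forall>k. 1 \<le> i \<longrightarrow> X0 i \<le> k \<longrightarrow> 0 < \<omega> (i,k) \<Longrightarrow> 1 \<le> b \<Longrightarrow> \<forall>k\<ge>X0 b. 0 < \<omega> (b,k)"
  by auto

lemma claim1:
  assumes B_sub: "B \<subseteq> {1..}" and B_inf: "infinite B"
    and B_sum: "(\<Sum>k. (SUP i\<in>B. ennreal (1 / F i (Suc k)))) < \<infinity>"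
  shows "(\<lambda>A. prob {\<omega>\<in>space M. urn_final A X0 \<omega> 1 = enat (X0 1)}) \<longlonglongrightarrow> 1"
  unfolding tendsto_iff
proof (intro allI impI)
  fix e :: real assume e: "0 < e"
  define F1 where "F1 = F 1 (X0 1)"
  have F1: "0 < F1" unfolding F1_def by (rule F_pos') auto
  define \<delta> where "\<delta> = e / (4 * F1)"
  have d: "0 < \<delta>" using e F1 by (simp add: \<delta>_def)
  define A1 where "A1 = {\<omega>\<in>space M. \<omega> (1, X0 1) \<le> \<delta>}"
  define A2 where "A2 A = {\<omega>\<in>space M. \<forall>b\<in>B\<inter>{1..A}. ennreal \<delta> \<le> Expl (X0 b) (\<lambda>l. \<omega> (b,l))}" for A
  define St where "St A = {\<omega>\<in>space M. urn_final A X0 \<omega> 1 = enat (X0 1)}" for A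
  have pA1: "prob A1 \<le> e/4"
  proof -
    have "prob A1 = 1 - exp (- \<delta> * F1)" unfolding A1_def F1_def by (rule prob_coord_le) (use d in auto)
    also have "\<dots> \<le> \<delta> * F1" using exp_ge_add_one_self[of "- \<delta> * F1"] by simp
    also have "\<dots> = e/4" using F1 by (simp add: \<delta>_def)
    finally show ?thesis .
  qed
  have ev: "eventually (\<lambda>A. prob (A2 A) < e/2) sequentially"
    unfolding A2_def by (rule order_tendstoD(2)[OF all_big_to_0[OF B_sub B_inf B_sum d]]) (use e in simp)
  show "eventually (\<lambda>A. dist (prob {\<omega>\<in>space M. urn_final A X0 \<omega> 1 = enat (X0 1)}) 1 < e) sequentially"
    using ev
  proof eventually_elim
    case (elim A)
    have sets: "A1 \<in> events" "A2 A \<in> events" "St A \<in> events" unfolding A1_def A2_def St_def by measurable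
    have sub: "AE \<omega> in M. \<omega> \<in> space M - St A \<longrightarrow> \<omega> \<in> A1 \<union> A2 A"
      using AE_good
    proof eventually_elim
      case (elim \<omega>)
      show ?case
      proof (intro impI)
        assume ns: "\<omega> \<in> space M - St A"
        show "\<omega> \<in> A1 \<union> A2 A"
        proof (cases "\<omega> (1, X0 1) \<le> \<delta>")
          case True then show ?thesis by (simp add: A1_def space_M)
        next
          case False
          have "ennreal \<delta> \<le> Expl (X0 b) (\<lambda>l. \<omega> (b,l))" if b: "b \<in> B \<inter> {1..A}" for b
          proof (rule ccontr)
            assume "\<not> ennreal \<delta> \<le> Expl (X0 b) (\<lambda>l. \<omega> (b,l))"
            then have "Expl (X0 b) (\<lambda>l. \<omega> (b,l)) \<le> ennreal (\<omega> (1, X0 1))"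
              using False by (meson ennreal_leI less_imp_le linorder_not_le order_trans)
            then have "urn_final A X0 \<omega> 1 = enat (X0 1)"
              by (rule D1_final[rotated 2]) (use elim b in auto)
            then show False using ns by (simp add: St_def)
          qed
          then show ?thesis by (simp add: A2_def space_M)
        qed
      qed
    qed
    have "prob (space M - St A) \<le> prob (A1 \<union> A2 A)"
      by (rule finite_measure_mono_AE[OF sub]) (use sets in auto)
    also have "\<dots> \<le> prob A1 + prob (A2 A)" by (rule measure_Un_le) (use sets in auto)
    finally have "prob (space M - St A) < e" using pA1 elim e by linarith
    moreover have "prob (space M - St A) = 1 - prob (St A)" by (rule prob_compl) (use sets in auto)
    moreover have "prob (St A) \<le> 1" by simp
    ultimately show ?case unfolding St_def[symmetric] by (simp add: dist_real_def)
  qed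
qed

end

lemma card_real_sum: "finite I \<Longrightarrow> real (card {i\<in>I. P i}) = (\<Sum>i\<in>I. if P i then 1 else 0)"
  by (simp add: sum.If_cases Int_def conj_commute)

lemma card_split:
  assumes "finite I" shows "real (card {i\<in>I. P i}) + real (card {i\<in>I. \<not> P i}) = real (card I)"
proof -
  have e: "I = {i\<in>I. P i} \<union> {i\<in>I. \<not> P i}" by auto
  have "card I = card {i\<in>I. P i} + card {i\<in>I. \<not> P i}"
    by (subst (1) e, rule card_Un_disjoint) (use assms in auto)
  then show ?thesis by simp
qed

context setting begin

lemma card_meas:
  assumes "finite I" and S: "\<And>i. i \<in> I \<Longrightarrow> {\<omega>\<in>space M. P i \<omega>} \<in> sets M"
  shows "(\<lambda>\<omega>. real (card {i\<in>I. P i \<omega>})) \<in> borel_measurable M"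
proof -
  have "(\<lambda>\<omega>. \<Sum>i\<in>I. indicator {\<omega>\<in>space M. P i \<omega>} \<omega> :: real) \<in> borel_measurable M"
    by (intro borel_measurable_sum borel_measurable_indicator S)
  moreover have "(\<Sum>i\<in>I. indicator {\<omega>\<in>space M. P i \<omega>} \<omega> :: real) = real (card {i\<in>I. P i \<omega>})"
    if "\<omega> \<in> space M" for \<omega>
  proof -
    have "(\<Sum>i\<in>I. indicator {\<omega>\<in>space M. P i \<omega>} \<omega> :: real) = (\<Sum>i\<in>I. if P i \<omega> then 1 else 0)"
      by (rule sum.cong) (auto simp: indicator_def that)
    then show ?thesis using card_real_sum[OF assms(1), of "\<lambda>i. P i \<omega>"] by (rule trans[OF _ sym])
  qed
  ultimately show ?thesis by (rule measurable_cong[THEN iffD1, rotated]) simp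
qed

lemma markov_count:
  assumes I: "finite I" and S: "\<And>i. i \<in> I \<Longrightarrow> S i \<in> events" and c: "0 < c"
  shows "prob {\<omega>\<in>space M. c \<le> real (card {i\<in>I. \<omega> \<in> S i})} \<le> (\<Sum>i\<in>I. prob (S i)) / c"
proof -
  define u where "u \<omega> = (\<Sum>i\<in>I. indicator (S i) \<omega> :: real)" for \<omega>
  have u_card: "u \<omega> = real (card {i\<in>I. \<omega> \<in> S i})" for \<omega>
  proof -
    have "u \<omega> = (\<Sum>i\<in>I. if \<omega> \<in> S i then 1 else 0)"
      unfolding u_def by (rule sum.cong) (auto simp: indicator_def)
    then show ?thesis using card_real_sum[OF I, of "\<lambda>i. \<omega> \<in> S i"] by (rule trans[OF _ sym])
  qed
  have [measurable]: "u \<in> borel_measurable M" unfolding u_def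
    by (intro borel_measurable_sum borel_measurable_indicator S)
  have int: "integrable M u" unfolding u_def
  proof (rule Bochner_Integration.integrable_sum)
    fix i assume "i \<in> I"
    then show "integrable M (indicator (S i) :: _ \<Rightarrow> real)"
      using S by (intro integrable_real_indicator) (auto simp: emeasure_eq_measure)
  qed
  have "prob {\<omega>\<in>space M. c \<le> u \<omega>} \<le> (\<integral>\<omega>. u \<omega> \<partial>M) / c"
    by (rule integral_Markov_inequality_measure[OF int, of "space M"]) (auto simp: u_def intro!: sum_nonneg c)
  also have "(\<integral>\<omega>. u \<omega> \<partial>M) = (\<Sum>i\<in>I. prob (S i))"
    unfolding u_def using S
    by (subst Bochner_Integration.integral_sum)
       (auto intro!: sum.cong integrable_real_indicator simp: Int_absorb2 sets.sets_into_space emeasure_eq_measure)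
  finally show ?thesis unfolding u_card .
qed


lemma claim2:
  assumes B_sub: "B \<subseteq> {1..}" and B_inf: "infinite B"
    and B_sum: "(\<Sum>k. (SUP i\<in>B. ennreal (1 / F i (Suc k)))) < \<infinity>"
    and Ls: "limsup (\<lambda>i. ereal (F i (X0 i))) < \<infinity>"
  shows "weak_conv_m
             (\<lambda>A. distr M borel
                (\<lambda>tau. real (card {i\<in>{1..A}. urn_final A X0 tau i = enat (X0 i)}) / real A))
             (return borel 1)"
  unfolding weak_conv_m_def weak_conv_def
proof (intro allI impI)
  fix x :: real
  define D where "D = (\<lambda>A \<omega>. real (card {i\<in>{1..A}. urn_final A X0 \<omega> i = enat (X0 i)}) / real A)"
  have Dm: "D A \<in> borel_measurable M" for A
    unfolding D_def by (intro borel_measurable_divide card_meas borel_measurable_const) auto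
  have cdfD: "cdf (distr M borel (D A)) x = prob {\<omega>\<in>space M. D A \<omega> \<le> x}" for A
  proof -
    have "cdf (distr M borel (D A)) x = prob (D A -` {..x} \<inter> space M)"
      unfolding cdf_def by (rule measure_distr[OF Dm]) simp
    also have "D A -` {..x} \<inter> space M = {\<omega>\<in>space M. D A \<omega> \<le> x}" by auto
    finally show ?thesis .
  qed
  have cdfR: "cdf (return borel 1) x = (if 1 \<le> x then 1 else 0)"
    unfolding cdf_def by (simp add: measure_return indicator_def)
  have D_le1: "D A \<omega> \<le> 1" if "1 \<le> A" for A \<omega>
  proof -
    have "card {i\<in>{1..A}. urn_final A X0 \<omega> i = enat (X0 i)} \<le> card {1..A}" by (rule card_mono) auto
    then show ?thesis using that by (simp add: D_def divide_le_eq_1)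
  qed
  have main: "(\<lambda>A. cdf (distr M borel (D A)) x) \<longlonglongrightarrow> cdf (return borel 1) x"
  proof (cases "1 \<le> x")
    case True
    have "eventually (\<lambda>A. cdf (distr M borel (D A)) x = cdf (return borel 1) x) sequentially"
    proof (rule eventually_sequentiallyI[of 1])
      fix A :: nat assume A: "1 \<le> A"
      have "{\<omega>\<in>space M. D A \<omega> \<le> x} = space M" using D_le1[OF A] True by (auto intro: order_trans)
      then show "cdf (distr M borel (D A)) x = cdf (return borel 1) x"
        using True by (simp add: cdfD cdfR prob_space)
    qed
    then show ?thesis by (rule tendsto_eventually)
  next
    case False
    then have x1: "x < 1" by simp
    obtain n :: nat where n: "limsup (\<lambda>i. ereal (F i (X0 i))) < ereal (real n)"
      using Ls less_PInf_Ex_of_nat by auto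
    define L where "L = real n"
    have L0: "0 \<le> L" by (simp add: L_def)
    obtain i0 where i0: "\<forall>i\<ge>i0. F i (X0 i) < L"
      using Limsup_lessD[OF n] unfolding eventually_sequentially L_def by auto
    show ?thesis unfolding cdfR using False unfolding tendsto_iff
    proof (simp, intro allI impI)
      fix e :: real assume e: "0 < e"
      define \<delta> where "\<delta> = e * (1 - x) / (4 * (L + 1))"
      have d: "0 < \<delta>" using e x1 L0 by (simp add: \<delta>_def)
      define A2 where "A2 A = {\<omega>\<in>space M. \<forall>b\<in>B\<inter>{1..A}. ennreal \<delta> \<le> Expl (X0 b) (\<lambda>l. \<omega> (b,l))}" for A
      define Sg where "Sg i = {\<omega>\<in>space M. \<omega> (i, X0 i) < \<delta>}" for i
      define NN where "NN A = {\<omega>\<in>space M. (1 - x) * real A \<le> real (card {i\<in>{1..A}. \<omega> \<in> Sg i})}" for A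
      have ev1: "eventually (\<lambda>A. prob (A2 A) < e/4) sequentially"
        unfolding A2_def by (rule order_tendstoD(2)[OF all_big_to_0[OF B_sub B_inf B_sum d]]) (use e in simp)
      obtain A0 :: nat where A0: "4 * real i0 / ((1 - x) * e) < real A0"
        using reals_Archimedean2 by blast
      have ev2: "eventually (\<lambda>A. A0 \<le> A \<and> 1 \<le> A) sequentially"
        by (rule eventually_sequentiallyI[of "max A0 1"]) auto
      show "eventually (\<lambda>A. \<bar>cdf (distr M borel (D A)) x\<bar> < e) sequentially"
        using ev1 ev2
      proof eventually_elim
        case (elim A)
        have A1: "1 \<le> A" using elim by simp
        have Sgs: "Sg i \<in> events" for i unfolding Sg_def by measurable
        have sets: "A2 A \<in> events" "NN A \<in> events" "{\<omega>\<in>space M. D A \<omega> \<le> x} \<in> events"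
          unfolding A2_def apply measurable
          unfolding NN_def apply (rule borel_measurable_le) apply simp
          apply (rule card_meas) using Sgs apply auto[2]
          apply (rule borel_measurable_le[OF Dm]) by simp
        have sub: "AE \<omega> in M. \<omega> \<in> {\<omega>\<in>space M. D A \<omega> \<le> x} \<longrightarrow> \<omega> \<in> A2 A \<union> NN A"
          using AE_good
        proof eventually_elim
          case (elim \<omega>)
          show ?case
          proof (intro impI)
            assume w: "\<omega> \<in> {\<omega>\<in>space M. D A \<omega> \<le> x}"
            show "\<omega> \<in> A2 A \<union> NN A"
            proof (cases "\<omega> \<in> A2 A")
              case True then show ?thesis by simp
            next
              case False
              then obtain b where b: "b \<in> B \<inter> {1..A}" "Expl (X0 b) (\<lambda>l. \<omega> (b,l)) < ennreal \<delta>"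
                by (auto simp: A2_def space_M not_le)
              have st: "{i\<in>{1..A}. \<not> \<omega> (i, X0 i) < \<delta>} \<subseteq> {i\<in>{1..A}. urn_final A X0 \<omega> i = enat (X0 i)}"
              proof safe
                fix i assume i: "i \<in> {1..A}" "\<not> \<omega> (i, X0 i) < \<delta>"
                have "Expl (X0 b) (\<lambda>l. \<omega> (b,l)) \<le> ennreal (\<omega> (i, X0 i))"
                  using b(2) i(2) by (meson ennreal_leI less_imp_le not_less order_trans)
                then show "urn_final A X0 \<omega> i = enat (X0 i)"
                  by (rule D1_final[rotated 2]) (use elim b in auto)
              qed
              have c1: "real (card {i\<in>{1..A}. \<not> \<omega> (i, X0 i) < \<delta>}) \<le> real (card {i\<in>{1..A}. urn_final A X0 \<omega> i = enat (X0 i)})"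
                using card_mono[OF _ st] by simp
              have c2: "real (card {i\<in>{1..A}. \<omega> (i, X0 i) < \<delta>}) + real (card {i\<in>{1..A}. \<not> \<omega> (i, X0 i) < \<delta>}) = real A"
                using card_split[of "{1..A}" "\<lambda>i. \<omega> (i, X0 i) < \<delta>"] by simp
              have "D A \<omega> \<le> x" using w by simp
              then have "real (card {i\<in>{1..A}. urn_final A X0 \<omega> i = enat (X0 i)}) \<le> x * real A"
                using A1 by (simp add: D_def divide_le_eq)
              then have "(1 - x) * real A \<le> real (card {i\<in>{1..A}. \<omega> (i, X0 i) < \<delta>})"
                using c1 c2 by (simp add: algebra_simps)
              then show ?thesis by (simp add: NN_def Sg_def space_M)
            qed
          qed
        qed
        have p1: "prob {\<omega>\<in>space M. D A \<omega> \<le> x} \<le> prob (A2 A \<union> NN A)"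
          by (rule finite_measure_mono_AE[OF sub]) (use sets in auto)
        have p2: "prob (A2 A \<union> NN A) \<le> prob (A2 A) + prob (NN A)" by (rule measure_Un_le) (use sets in auto)
        have p3: "prob (NN A) \<le> (\<Sum>i\<in>{1..A}. prob (Sg i)) / ((1 - x) * real A)"
          unfolding NN_def by (rule markov_count) (use Sgs x1 A1 in auto)
        have p4: "(\<Sum>i\<in>{1..A}. prob (Sg i)) \<le> real i0 + real A * (L * \<delta>)"
        proof -
          have each: "prob (Sg i) \<le> (if i < i0 then 1 else 0) + L * \<delta>" if i: "i \<in> {1..A}" for i
          proof (cases "i < i0")
            case True then show ?thesis using L0 d by (simp add: add_increasing2)
          next
            case False
            have "prob (Sg i) \<le> prob {\<omega>\<in>space M. \<omega> (i, X0 i) \<le> \<delta>}"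
              by (rule finite_measure_mono) (auto simp: Sg_def)
            also have "\<dots> = 1 - exp (- \<delta> * F i (X0 i))" by (rule prob_coord_le) (use i d in auto)
            also have "\<dots> \<le> \<delta> * F i (X0 i)" using exp_ge_add_one_self[of "- \<delta> * F i (X0 i)"] by simp
            also have "\<dots> \<le> \<delta> * L" using i0 False d by (intro mult_left_mono) (auto simp: not_less less_imp_le)
            finally show ?thesis using False by (simp add: mult.commute)
          qed
          have "(\<Sum>i\<in>{1..A}. prob (Sg i)) \<le> (\<Sum>i\<in>{1..A}. (if i < i0 then 1 else 0) + L * \<delta>)"
            by (rule sum_mono) (rule each)
          also have "\<dots> = (\<Sum>i\<in>{1..A}. if i < i0 then 1 else 0) + real A * (L * \<delta>)"
            by (simp add: sum.distrib)
          also have "(\<Sum>i\<in>{1..A}. if i < i0 then 1 else (0::real)) = real (card {i\<in>{1..A}. i < i0})"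
            using card_real_sum[of "{1..A}" "\<lambda>i. i < i0"] by simp
          also have "real (card {i\<in>{1..A}. i < i0}) \<le> real (card {..<i0})"
            by (intro of_nat_mono card_mono) auto
          finally show ?thesis by simp
        qed
        have p5: "real i0 / ((1 - x) * real A) < e / 4"
        proof -
          have "4 * real i0 / ((1 - x) * e) < real A" using A0 elim by linarith
          then have "4 * real i0 < real A * ((1 - x) * e)" using x1 e by (simp add: divide_less_eq)
          then show ?thesis using x1 A1 e by (simp add: divide_less_eq algebra_simps)
        qed
        have p6: "real A * (L * \<delta>) / ((1 - x) * real A) \<le> e / 4"
        proof -
          have ne: "1 - x \<noteq> 0" "real A \<noteq> 0" "L + 1 \<noteq> 0" using x1 A1 L0 by auto
          have "real A * (L * \<delta>) / ((1 - x) * real A) = L * \<delta> / (1 - x)" using ne by simp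
          also have "\<dots> \<le> e / 4"
          proof -
            have ne4: "4 * L + 4 \<noteq> 0" using L0 by linarith
            have "(L + 1) * \<delta> = e * (1 - x) / 4" using ne ne4 by (simp add: \<delta>_def field_simps)
            moreover have "L * \<delta> \<le> (L + 1) * \<delta>" using d by simp
            ultimately have "L * \<delta> \<le> e / 4 * (1 - x)" by simp
            then show ?thesis using x1 by (simp add: divide_le_eq)
          qed
          finally show ?thesis .
        qed
        have "prob (NN A) \<le> (real i0 + real A * (L * \<delta>)) / ((1 - x) * real A)"
          using p3 p4 x1 A1 by (meson divide_right_mono order_trans mult_nonneg_nonneg less_imp_le diff_gt_0_iff_gt of_nat_0_le_iff)
        also have "\<dots> = real i0 / ((1 - x) * real A) + real A * (L * \<delta>) / ((1 - x) * real A)"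
          by (simp add: add_divide_distrib)
        finally have "prob (NN A) < e / 2" using p5 p6 by linarith
        then have "prob {\<omega>\<in>space M. D A \<omega> \<le> x} < e" using p1 p2 elim e by linarith
        then show ?case by (simp add: cdfD)
      qed
    qed
  qed
  then show "(\<lambda>n. cdf (distr M borel (\<lambda>tau. real (card {i\<in>{1..n}. urn_final n X0 tau i = enat (X0 i)}) / real n)) x)
    \<longlonglongrightarrow> cdf (return borel 1) x" unfolding D_def .
qed

end

lemma card_meas_gen:
  assumes "finite I" and S: "\<And>i. i \<in> I \<Longrightarrow> {\<omega>\<in>space N. P i \<omega>} \<in> sets N"
  shows "(\<lambda>\<omega>. real (card {i\<in>I. P i \<omega>})) \<in> borel_measurable N"
proof -
  have "(\<lambda>\<omega>. \<Sum>i\<in>I. indicator {\<omega>\<in>space N. P i \<omega>} \<omega> :: real) \<in> borel_measurable N"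
    by (intro borel_measurable_sum borel_measurable_indicator S)
  moreover have "(\<Sum>i\<in>I. indicator {\<omega>\<in>space N. P i \<omega>} \<omega> :: real) = real (card {i\<in>I. P i \<omega>})"
    if "\<omega> \<in> space N" for \<omega>
  proof -
    have "(\<Sum>i\<in>I. indicator {\<omega>\<in>space N. P i \<omega>} \<omega> :: real) = (\<Sum>i\<in>I. if P i \<omega> then 1 else 0)"
      by (rule sum.cong) (auto simp: indicator_def that)
    then show ?thesis using card_real_sum[OF assms(1), of "\<lambda>i. P i \<omega>"] by (rule trans[OF _ sym])
  qed
  ultimately show ?thesis by (rule measurable_cong[THEN iffD1, rotated]) simp
qed

lemma h_t1: fixes c S k m A :: real assumes "k \<noteq> 0" "A \<noteq> 0"
  shows "c * S / (2 * k) * (2 * k * m / A) = c * (S / A) * m"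
  using assms by (simp add: field_simps)

lemma h_t2: fixes k S H0 \<eta> A :: real assumes "A \<noteq> 0"
  shows "(k - 1) * (S / A * (H0 + \<eta> * A)) = (k - 1) * S * H0 / A + (k - 1) * S * \<eta>"
  using assms by (simp add: field_simps)

lemma h_t4: fixes k S e :: real assumes "k \<noteq> 0" "S \<noteq> 0"
  shows "(k - 1) * S * (e / (4 * k * S)) = e / 4 * ((k - 1) / k)"
  using assms by (simp add: field_simps)

lemma card_Q_sets:
  assumes I: "finite I" and S: "\<And>i. i \<in> I \<Longrightarrow> {\<omega>\<in>space N. P i \<omega>} \<in> sets N"
  shows "{\<omega>\<in>space N. Q (card {i\<in>I. P i \<omega>})} \<in> sets N"
proof -
  have cm: "(\<lambda>\<omega>. real (card {i\<in>I. P i \<omega>})) \<in> borel_measurable N" by (rule card_meas_gen[OF I S])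
  have "{\<omega>\<in>space N. Q (card {i\<in>I. P i \<omega>})} = (\<Union>n\<in>{n. n \<le> card I \<and> Q n}. {\<omega>\<in>space N. real (card {i\<in>I. P i \<omega>}) = real n})"
  proof safe
    fix \<omega> assume "\<omega> \<in> space N" "Q (card {i\<in>I. P i \<omega>})"
    moreover have "card {i\<in>I. P i \<omega>} \<le> card I" using I by (intro card_mono) auto
    ultimately show "\<omega> \<in> (\<Union>n\<in>{n. n \<le> card I \<and> Q n}. {\<omega>\<in>space N. real (card {i\<in>I. P i \<omega>}) = real n})"
      by auto
  qed auto
  also have "\<dots> \<in> sets N"
  proof (rule sets.finite_UN)
    fix n show "{\<omega>\<in>space N. real (card {i\<in>I. P i \<omega>}) = real n} \<in> sets N"
      by (rule borel_measurable_eq[OF cm]) simp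
  qed simp
  finally show ?thesis .
qed

lemma rank_count:
  fixes \<sigma> :: "nat \<Rightarrow> real"
  assumes I: "finite I"
  shows "card {j\<in>I. card {i\<in>I - {j}. \<sigma> i \<le> \<sigma> j} + 1 < K} \<le> K - 1"
proof (cases "{j\<in>I. card {i\<in>I - {j}. \<sigma> i \<le> \<sigma> j} + 1 < K} = {}")
  case True then show ?thesis by (subst True) simp
next
  case False
  define J where "J = {j\<in>I. card {i\<in>I - {j}. \<sigma> i \<le> \<sigma> j} + 1 < K}"
  have fJ: "finite J" using I by (simp add: J_def)
  have neJ: "\<sigma> ` J \<noteq> {}" using False by (simp add: J_def)
  obtain jm where jm: "jm \<in> J" "\<sigma> jm = Max (\<sigma> ` J)"
    using Max_in[OF finite_imageI[OF fJ] neJ] by auto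
  have le: "\<sigma> j \<le> \<sigma> jm" if "j \<in> J" for j using that fJ jm(2) by simp
  have "J - {jm} \<subseteq> {i\<in>I - {jm}. \<sigma> i \<le> \<sigma> jm}" using le by (auto simp: J_def)
  then have "card (J - {jm}) \<le> card {i\<in>I - {jm}. \<sigma> i \<le> \<sigma> jm}" by (intro card_mono) (use I in auto)
  moreover have "card {i\<in>I - {jm}. \<sigma> i \<le> \<sigma> jm} + 1 < K" using jm(1) by (simp add: J_def)
  moreover have "card J = card (J - {jm}) + 1" using card_Suc_Diff1[OF fJ jm(1)] by simp
  ultimately show ?thesis unfolding J_def[symmetric] by simp
qed

lemma det3:
  fixes \<omega> :: "nat \<times> nat \<Rightarrow> real"
  assumes g: "\<forall>j\<in>{1..A}. \<forall>k\<ge>X0 j. 0 < \<omega> (j,k)" and K: "1 \<le> K" and s: "0 < s"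
    and NS: "K \<le> card {i\<in>{1..A}. \<omega> (i, X0 i) \<le> s}"
    and noG: "\<forall>j\<in>{1..A}. \<not> (card {i\<in>{1..A} - {j}. \<omega> (i, X0 i) \<le> \<omega> (j, X0 j)} + 1 < K \<and> \<omega> (j, Suc (X0 j)) < s)"
  shows "K \<le> card {i\<in>{1..A}. urn_final A X0 \<omega> i \<noteq> enat (X0 i)}"
proof -
  define E where "E j = Expl (X0 j) (\<lambda>l. \<omega> (j,l))" for j
  define C where "C = {i\<in>{1..A}. \<forall>j\<in>{1..A}. ennreal (\<omega> (i, X0 i)) < E j}"
  have CM: "C \<subseteq> {i\<in>{1..A}. urn_final A X0 \<omega> i \<noteq> enat (X0 i)}"
  proof safe
    fix i assume "i \<in> C" then show "i \<in> {1..A}" by (simp add: C_def)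
  next
    fix i assume i: "i \<in> C" "urn_final A X0 \<omega> i = enat (X0 i)"
    have "urn_final A X0 \<omega> i \<noteq> enat (X0 i)"
      by (rule D2) (use i g in \<open>auto simp: C_def E_def\<close>)
    then show False using i(2) by simp
  qed
  have "K \<le> card C"
  proof (rule ccontr)
    assume CK: "\<not> K \<le> card C"
    have A1: "1 \<le> A"
    proof (rule ccontr)
      assume "\<not> 1 \<le> A" then have A0: "A = 0" by simp
      show False using NS K by (simp add: A0)
    qed
    have fin: "finite (E ` {1..A})" "E ` {1..A} \<noteq> {}" using A1 by auto
    obtain js where js: "js \<in> {1..A}" "E js = Min (E ` {1..A})" using Min_in[OF fin] by auto
    have Ejs: "E js \<le> E j" if "j \<in> {1..A}" for j using js(2) fin that by simp
    show False
    proof (cases "ennreal s < E js")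
      case True
      have "{i\<in>{1..A}. \<omega> (i, X0 i) \<le> s} \<subseteq> C"
      proof safe
        fix i assume i: "i \<in> {1..A}" "\<omega> (i, X0 i) \<le> s"
        have "ennreal (\<omega> (i, X0 i)) < E j" if "j \<in> {1..A}" for j
          using i(2) True Ejs[OF that] by (meson ennreal_leI le_less_trans less_le_trans)
        then show "i \<in> C" using i by (simp add: C_def)
      qed
      then have "card {i\<in>{1..A}. \<omega> (i, X0 i) \<le> s} \<le> card C" by (intro card_mono) (auto simp: C_def)
      then show False using NS CK by simp
    next
      case False
      let ?sg = "\<omega> (js, X0 js)" and ?rh = "\<omega> (js, Suc (X0 js))"
      have pos: "0 < ?sg" "0 < ?rh" using g js(1) by auto
      have "(\<Sum>l=X0 js..Suc (X0 js). \<omega> (js, l)) = ?sg + ?rh" by simp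
      then have "ennreal (?sg + ?rh) \<le> E js" unfolding E_def Expl_def
        by (metis (no_types, lifting) SUP_upper UNIV_I)
      also have "\<dots> \<le> ennreal s" using False by simp
      finally have sr: "?sg + ?rh \<le> s" using s by (simp add: ennreal_le_iff)
      have rs: "?rh < s" using sr pos by simp
      have "{i\<in>{1..A}. \<omega> (i, X0 i) \<le> ?sg} \<subseteq> C"
      proof safe
        fix i assume i: "i \<in> {1..A}" "\<omega> (i, X0 i) \<le> ?sg"
        have "ennreal (\<omega> (i, X0 i)) < ennreal (?sg + ?rh)" using i(2) pos by (intro ennreal_lessI) auto
        also have "\<dots> \<le> E js" by fact
        finally have "ennreal (\<omega> (i, X0 i)) < E j" if "j \<in> {1..A}" for j using Ejs[OF that] by simp
        then show "i \<in> C" using i by (simp add: C_def)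
      qed
      then have c1: "card {i\<in>{1..A}. \<omega> (i, X0 i) \<le> ?sg} \<le> card C" by (intro card_mono) (auto simp: C_def)
      have "{i\<in>{1..A}. \<omega> (i, X0 i) \<le> ?sg} = insert js {i\<in>{1..A} - {js}. \<omega> (i, X0 i) \<le> ?sg}"
        using js(1) by auto
      then have "card {i\<in>{1..A}. \<omega> (i, X0 i) \<le> ?sg} = card {i\<in>{1..A} - {js}. \<omega> (i, X0 i) \<le> ?sg} + 1"
        by simp
      then have "card {i\<in>{1..A} - {js}. \<omega> (i, X0 i) \<le> ?sg} + 1 < K" using c1 CK by simp
      then show False using noG js(1) rs by blast
    qed
  qed
  also have "card C \<le> card {i\<in>{1..A}. urn_final A X0 \<omega> i \<noteq> enat (X0 i)}"
    by (rule card_mono[OF _ CM]) simp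
  finally show ?thesis .
qed


context setting begin

lemma sum_prob_le:
  assumes I: "finite I" and S: "\<And>i. i \<in> I \<Longrightarrow> S i \<in> events"
    and bd: "\<And>\<omega>. \<omega> \<in> space M \<Longrightarrow> real (card {i\<in>I. \<omega> \<in> S i}) \<le> c"
  shows "(\<Sum>i\<in>I. prob (S i)) \<le> c"
proof -
  define u where "u \<omega> = (\<Sum>i\<in>I. indicator (S i) \<omega> :: real)" for \<omega>
  have u_card: "u \<omega> = real (card {i\<in>I. \<omega> \<in> S i})" for \<omega>
  proof -
    have "u \<omega> = (\<Sum>i\<in>I. if \<omega> \<in> S i then 1 else 0)"
      unfolding u_def by (rule sum.cong) (auto simp: indicator_def)
    then show ?thesis using card_real_sum[OF I, of "\<lambda>i. \<omega> \<in> S i"] by (rule trans[OF _ sym])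
  qed
  have int: "integrable M u" unfolding u_def
  proof (rule Bochner_Integration.integrable_sum)
    fix i assume "i \<in> I"
    then show "integrable M (indicator (S i) :: _ \<Rightarrow> real)"
      using S by (intro integrable_real_indicator) (auto simp: emeasure_eq_measure)
  qed
  have "(\<Sum>i\<in>I. prob (S i)) = (\<integral>\<omega>. u \<omega> \<partial>M)"
    unfolding u_def using S
    by (subst Bochner_Integration.integral_sum)
       (auto intro!: sum.cong integrable_real_indicator simp: Int_absorb2 sets.sets_into_space emeasure_eq_measure)
  also have "\<dots> \<le> (\<integral>\<omega>. c \<partial>M)"
    by (rule integral_mono[OF int]) (auto simp: u_card bd)
  also have "\<dots> = c" by (simp add: prob_space)
  finally show ?thesis .
qed

lemma GR_indep:
  assumes j: "j \<in> {1..A}"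
  shows "prob ({\<omega>\<in>space M. card {i\<in>{1..A} - {j}. \<omega> (i, X0 i) \<le> \<omega> (j, X0 j)} + 1 < K}
              \<inter> {\<omega>\<in>space M. \<omega> (j, Suc (X0 j)) < s})
       = prob {\<omega>\<in>space M. card {i\<in>{1..A} - {j}. \<omega> (i, X0 i) \<le> \<omega> (j, X0 j)} + 1 < K}
         * prob {\<omega>\<in>space M. \<omega> (j, Suc (X0 j)) < s}"
proof -
  define K0 where "K0 = (\<lambda>i. (i, X0 i)) ` {1..A}"
  define K1 where "K1 = {(j, Suc (X0 j))}"
  define KK where "KK l = (if l = (0::nat) then K0 else K1)" for l
  define Y0 where "Y0 = {f\<in>space (PiM K0 Mc). card {i\<in>{1..A} - {j}. f (i, X0 i) \<le> f (j, X0 j)} + 1 < K}"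
  define Y1 where "Y1 = {f\<in>space (PiM K1 Mc). f (j, Suc (X0 j)) < s}"
  define Y where "Y l = (if l = (0::nat) then Y0 else Y1)" for l
  have Y0s: "Y0 \<in> sets (PiM K0 Mc)"
  proof -
    have cm: "(\<lambda>f. real (card {i\<in>{1..A} - {j}. f (i, X0 i) \<le> f (j, X0 j)})) \<in> borel_measurable (PiM K0 Mc)"
    proof (rule card_meas_gen)
      fix i assume "i \<in> {1..A} - {j}"
      then show "{f \<in> space (PiM K0 Mc). f (i, X0 i) \<le> f (j, X0 j)} \<in> sets (PiM K0 Mc)"
        using j by (intro borel_measurable_le meas_PiM_coord) (auto simp: K0_def)
    qed simp
    have "Y0 = {f\<in>space (PiM K0 Mc). real (card {i\<in>{1..A} - {j}. f (i, X0 i) \<le> f (j, X0 j)}) + 1 < real K}"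
      unfolding Y0_def by (intro Collect_cong conj_cong refl) linarith
    also have "\<dots> \<in> sets (PiM K0 Mc)" using cm by measurable
    finally show ?thesis .
  qed
  have Y1s: "Y1 \<in> sets (PiM K1 Mc)"
    unfolding Y1_def by (intro borel_measurable_less meas_PiM_coord borel_measurable_const) (auto simp: K1_def)
  have Ys: "Y l \<in> sets (PiM (KK l) Mc)" if "l \<in> {0,1}" for l using that Y0s Y1s by (auto simp: Y_def KK_def)
  have dj: "disjoint_family_on KK {0,1}" by (auto simp: disjoint_family_on_def KK_def K0_def K1_def)
  have e0: "{\<omega> \<in> space M. restrict \<omega> (KK 0) \<in> Y 0} = {\<omega>\<in>space M. card {i\<in>{1..A} - {j}. \<omega> (i, X0 i) \<le> \<omega> (j, X0 j)} + 1 < K}"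
  proof -
    have eq: "{i\<in>{1..A} - {j}. restrict \<omega> K0 (i, X0 i) \<le> restrict \<omega> K0 (j, X0 j)} = {i\<in>{1..A} - {j}. \<omega> (i, X0 i) \<le> \<omega> (j, X0 j)}" for \<omega>
      using j by (auto simp: K0_def)
    have r: "restrict \<omega> K0 \<in> space (PiM K0 Mc)" for \<omega> by (simp add: space_PiM space_Mc)
    have "restrict \<omega> K0 \<in> Y0 \<longleftrightarrow> card {i\<in>{1..A} - {j}. \<omega> (i, X0 i) \<le> \<omega> (j, X0 j)} + 1 < K" for \<omega>
      by (simp only: Y0_def mem_Collect_eq eq) (simp add: r)
    then show ?thesis by (simp add: Y_def KK_def)
  qed
  have e1: "{\<omega> \<in> space M. restrict \<omega> (KK (Suc 0)) \<in> Y (Suc 0)} = {\<omega>\<in>space M. \<omega> (j, Suc (X0 j)) < s}"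
    by (auto simp: Y_def KK_def Y1_def K1_def space_PiM space_Mc)
  have "prob (\<Inter>l\<in>{0,1}. {\<omega> \<in> space M. restrict \<omega> (KK l) \<in> Y l})
      = (\<Prod>l\<in>{0,1}. prob {\<omega> \<in> space M. restrict \<omega> (KK l) \<in> Y l})"
    by (rule prob_indep_restrict) (use dj Ys in auto)
  then show ?thesis by (simp add: e0 e1)
qed

lemma block_bound:
  assumes c: "0 < c" and i0: "1 \<le> i0" and Fc: "\<forall>i\<ge>i0. c \<le> F i (X0 i)" and s: "0 \<le> s"
    and bl: "i0 + K * m \<le> A + 1" and m: "1 \<le> m"
  shows "prob {\<omega>\<in>space M. card {i\<in>{1..A}. \<omega> (i, X0 i) \<le> s} < K} \<le> real K * exp (- c * s * real m)"
proof -
  define Bl where "Bl r = {i0 + r*m ..< i0 + r*m + m}" for r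
  define Ev where "Ev r = {\<omega>\<in>space M. \<forall>i\<in>Bl r. s < \<omega> (i, X0 i)}" for r
  have Bl_sub: "Bl r \<subseteq> {1..A}" if "r < K" for r
  proof -
    have "(r + 1) * m \<le> K * m" using that by (intro mult_right_mono) auto
    then show ?thesis using i0 bl by (auto simp: Bl_def algebra_simps)
  qed
  have Bl_dj: "r = r'" if "x \<in> Bl r" "x \<in> Bl r'" for x r r'
  proof -
    have "r = (x - i0) div m"
      using that(1) m by (auto simp: Bl_def mult.commute intro!: div_nat_eqI[symmetric])
    moreover have "r' = (x - i0) div m"
      using that(2) m by (auto simp: Bl_def mult.commute intro!: div_nat_eqI[symmetric])
    ultimately show ?thesis by simp
  qed
  have Evs: "Ev r \<in> events" for r unfolding Ev_def
    by (intro sets.sets_Collect_finite_All borel_measurable_less measurable_const coord_meas) (auto simp: Bl_def)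
  have cover: "{\<omega>\<in>space M. card {i\<in>{1..A}. \<omega> (i, X0 i) \<le> s} < K} \<subseteq> (\<Union>r<K. Ev r)"
  proof
    fix \<omega> assume w: "\<omega> \<in> {\<omega>\<in>space M. card {i\<in>{1..A}. \<omega> (i, X0 i) \<le> s} < K}"
    show "\<omega> \<in> (\<Union>r<K. Ev r)"
    proof (rule ccontr)
      assume "\<omega> \<notin> (\<Union>r<K. Ev r)"
      then have "\<forall>r\<in>{..<K}. \<exists>i. i \<in> Bl r \<and> \<omega> (i, X0 i) \<le> s"
        using w by (auto simp: Ev_def not_less)
      then obtain g where g: "\<And>r. r \<in> {..<K} \<Longrightarrow> g r \<in> Bl r \<and> \<omega> (g r, X0 (g r)) \<le> s"
        by metis
      have inj: "inj_on g {..<K}"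
        by (rule inj_onI) (use g Bl_dj in metis)
      have "g ` {..<K} \<subseteq> {i\<in>{1..A}. \<omega> (i, X0 i) \<le> s}"
      proof (rule image_subsetI)
        fix r assume r: "r \<in> {..<K}"
        have "g r \<in> {1..A}" using g[OF r] Bl_sub[of r] r by auto
        then show "g r \<in> {i\<in>{1..A}. \<omega> (i, X0 i) \<le> s}" using g[OF r] by simp
      qed
      then have "card (g ` {..<K}) \<le> card {i\<in>{1..A}. \<omega> (i, X0 i) \<le> s}" by (intro card_mono) auto
      then show False using card_image[OF inj] w by simp
    qed
  qed
  have pEv: "prob (Ev r) \<le> exp (- c * s * real m)" for r
  proof -
    define KK where "KK i = {(i, X0 i)}" for i
    define Y where "Y i = {f\<in>space (PiM (KK i) Mc). s < f (i, X0 i)}" for i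
    have Ys: "Y i \<in> sets (PiM (KK i) Mc)" for i
      unfolding Y_def by (intro borel_measurable_less meas_PiM_coord borel_measurable_const) (auto simp: KK_def)
    have dj: "disjoint_family_on KK (Bl r)" by (auto simp: disjoint_family_on_def KK_def)
    have ne: "Bl r \<noteq> {}" using m by (auto simp: Bl_def)
    have eqs: "{\<omega> \<in> space M. restrict \<omega> (KK i) \<in> Y i} = {\<omega>\<in>space M. s < \<omega> (i, X0 i)}" for i
      by (auto simp: Y_def KK_def space_PiM space_Mc)
    have "Ev r = (\<Inter>i\<in>Bl r. {\<omega> \<in> space M. restrict \<omega> (KK i) \<in> Y i})"
      using ne unfolding eqs by (auto simp: Ev_def)
    then have "prob (Ev r) = (\<Prod>i\<in>Bl r. prob {\<omega> \<in> space M. restrict \<omega> (KK i) \<in> Y i})"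
      using prob_indep_restrict[of "Bl r" KK Y] ne dj Ys by (simp add: Bl_def)
    also have "\<dots> = (\<Prod>i\<in>Bl r. exp (- s * F i (X0 i)))"
      unfolding eqs using i0 s by (intro prod.cong refl prob_coord_gt) (auto simp: Bl_def)
    also have "\<dots> \<le> (\<Prod>i\<in>Bl r. exp (- c * s))"
    proof (rule prod_mono)
      fix i assume "i \<in> Bl r"
      then have "c \<le> F i (X0 i)" using Fc by (auto simp: Bl_def)
      then have "s * c \<le> s * F i (X0 i)" using s by (rule mult_left_mono)
      then show "0 \<le> exp (- s * F i (X0 i)) \<and> exp (- s * F i (X0 i)) \<le> exp (- c * s)"
        by (simp add: mult.commute)
    qed
    also have "\<dots> = exp (- c * s) ^ m" by (simp add: Bl_def)
    also have "\<dots> = exp (- c * s * real m)" by (simp add: exp_of_nat_mult[symmetric] mult.commute)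
    finally show ?thesis .
  qed
  have "prob {\<omega>\<in>space M. card {i\<in>{1..A}. \<omega> (i, X0 i) \<le> s} < K} \<le> prob (\<Union>r<K. Ev r)"
    by (rule finite_measure_mono[OF cover]) (use Evs in auto)
  also have "\<dots> \<le> (\<Sum>r<K. prob (Ev r))" by (rule finite_measure_subadditive_finite) (use Evs in auto)
  also have "\<dots> \<le> (\<Sum>r<K. exp (- c * s * real m))" by (rule sum_mono) (rule pEv)
  also have "\<dots> = real K * exp (- c * s * real m)" by simp
  finally show ?thesis .
qed

lemma fail_bound:
  assumes K1: "1 \<le> K" and c: "0 < c" and i0: "1 \<le> i0" and Fc: "\<forall>i\<ge>i0. c \<le> F i (X0 i)" and s: "0 < s"
    and bl: "i0 + K * m \<le> A + 1" and m: "1 \<le> m"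
    and H0: "0 \<le> H" and H: "\<forall>j\<in>{1..A}. F j (Suc (X0 j)) \<le> H"
  shows "prob {\<omega>\<in>space M. \<not> K \<le> card {i\<in>{1..A}. urn_final A X0 \<omega> i \<noteq> enat (X0 i)}}
         \<le> real K * exp (- c * s * real m) + (real K - 1) * (s * H)"
proof -
  define G where "G j = {\<omega>\<in>space M. card {i\<in>{1..A} - {j}. \<omega> (i, X0 i) \<le> \<omega> (j, X0 j)} + 1 < K}" for j
  define R where "R j = {\<omega>\<in>space M. \<omega> (j, Suc (X0 j)) < s}" for j
  define N where "N = {\<omega>\<in>space M. card {i\<in>{1..A}. \<omega> (i, X0 i) \<le> s} < K}"
  define Fl where "Fl = {\<omega>\<in>space M. \<not> K \<le> card {i\<in>{1..A}. urn_final A X0 \<omega> i \<noteq> enat (X0 i)}}"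
  have Gs: "G j \<in> events" for j unfolding G_def
    by (rule card_Q_sets) (auto intro!: borel_measurable_le coord_meas)
  have Rs: "R j \<in> events" for j unfolding R_def by measurable
  have Ns: "N \<in> events" unfolding N_def
    by (rule card_Q_sets) (auto intro!: borel_measurable_le coord_meas)
  have Fls: "Fl \<in> events" unfolding Fl_def
  proof (rule card_Q_sets)
    fix i show "{\<omega> \<in> space M. urn_final A X0 \<omega> i \<noteq> enat (X0 i)} \<in> events"
      using sets.compl_sets[OF stay_sets[of A i]] by (simp add: set_diff_eq)
  qed simp
  have URs: "(\<Union>j\<in>{1..A}. G j \<inter> R j) \<in> events" using Gs Rs by auto
  have sub: "AE \<omega> in M. \<omega> \<in> Fl \<longrightarrow> \<omega> \<in> N \<union> (\<Union>j\<in>{1..A}. G j \<inter> R j)"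
    using AE_good
  proof eventually_elim
    case (elim \<omega>)
    show ?case
    proof (rule impI, rule ccontr)
      assume w: "\<omega> \<in> Fl" and nw: "\<omega> \<notin> N \<union> (\<Union>j\<in>{1..A}. G j \<inter> R j)"
      have "K \<le> card {i\<in>{1..A}. urn_final A X0 \<omega> i \<noteq> enat (X0 i)}"
        by (rule det3[OF _ K1 s]) (use elim nw in \<open>auto simp: N_def G_def R_def space_M\<close>)
      then show False using w by (simp add: Fl_def)
    qed
  qed
  have "prob Fl \<le> prob (N \<union> (\<Union>j\<in>{1..A}. G j \<inter> R j))"
    by (rule finite_measure_mono_AE[OF sub]) (use Ns URs in auto)
  also have "\<dots> \<le> prob N + prob (\<Union>j\<in>{1..A}. G j \<inter> R j)" by (rule measure_Un_le) (use Ns URs in auto)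
  also have "prob (\<Union>j\<in>{1..A}. G j \<inter> R j) \<le> (\<Sum>j\<in>{1..A}. prob (G j \<inter> R j))"
    by (rule finite_measure_subadditive_finite) (use Gs Rs in auto)
  also have "\<dots> = (\<Sum>j\<in>{1..A}. prob (G j) * prob (R j))"
    unfolding G_def R_def by (intro sum.cong refl GR_indep)
  also have "\<dots> \<le> (\<Sum>j\<in>{1..A}. prob (G j) * (s * H))"
  proof (rule sum_mono)
    fix j assume j: "j \<in> {1..A}"
    have "prob (R j) \<le> prob {\<omega>\<in>space M. \<omega> (j, Suc (X0 j)) \<le> s}"
      by (rule finite_measure_mono) (auto simp: R_def)
    also have "\<dots> = 1 - exp (- s * F j (Suc (X0 j)))" by (rule prob_coord_le) (use j s in auto)
    also have "\<dots> \<le> s * F j (Suc (X0 j))" using exp_ge_add_one_self[of "- s * F j (Suc (X0 j))"] by simp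
    also have "\<dots> \<le> s * H" using H j s by (intro mult_left_mono) auto
    finally show "prob (G j) * prob (R j) \<le> prob (G j) * (s * H)" by (intro mult_left_mono) auto
  qed
  also have "\<dots> = (s * H) * (\<Sum>j\<in>{1..A}. prob (G j))" by (simp add: sum_distrib_left mult.commute)
  also have "\<dots> \<le> (s * H) * (real K - 1)"
  proof (rule mult_left_mono)
    show "(\<Sum>j\<in>{1..A}. prob (G j)) \<le> real K - 1"
    proof (rule sum_prob_le)
      fix \<omega> assume "\<omega> \<in> space M"
      then have "{j\<in>{1..A}. \<omega> \<in> G j} = {j\<in>{1..A}. card {i\<in>{1..A} - {j}. \<omega> (i, X0 i) \<le> \<omega> (j, X0 j)} + 1 < K}"
        by (auto simp: G_def)
      then have "card {j\<in>{1..A}. \<omega> \<in> G j} \<le> K - 1"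
        using rank_count[of "{1..A}" "\<lambda>i. \<omega> (i, X0 i)" K] by simp
      then show "real (card {j\<in>{1..A}. \<omega> \<in> G j}) \<le> real K - 1" using K1 by linarith
    qed (use Gs in auto)
  qed (use s H0 in auto)
  finally have "prob Fl \<le> prob N + s * H * (real K - 1)" by simp
  moreover have "prob N \<le> real K * exp (- c * s * real m)"
    unfolding N_def by (rule block_bound[OF c i0 Fc _ bl m]) (use s in auto)
  ultimately show ?thesis unfolding Fl_def by (simp add: mult.commute)
qed

lemma claim3:
  assumes Li: "liminf (\<lambda>i. ereal (F i (X0 i))) > 0"
    and Lr: "(\<lambda>i. F i (X0 i + 1) / real i) \<longlonglongrightarrow> 0"
  shows "\<forall>K::nat. (\<lambda>A. prob {tau \<in> space M.
                 K \<le> card {i\<in>{1..A}. urn_final A X0 tau i \<noteq> enat (X0 i)}}) \<longlonglongrightarrow> 1"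
proof
  fix K :: nat
  show "(\<lambda>A. prob {tau \<in> space M. K \<le> card {i\<in>{1..A}. urn_final A X0 tau i \<noteq> enat (X0 i)}}) \<longlonglongrightarrow> 1"
  proof (cases "K = 0")
    case True then show ?thesis by (simp add: prob_space)
  next
    case False
    then have K1: "1 \<le> K" by simp
    obtain c where c: "0 < ereal c" "ereal c < liminf (\<lambda>i. ereal (F i (X0 i)))"
      using ereal_dense2[OF Li] by blast
    have c0: "0 < c" using c(1) by simp
    obtain i1 where i1: "\<forall>i\<ge>i1. ereal c < ereal (F i (X0 i))"
      using less_LiminfD[OF c(2)] unfolding eventually_sequentially by auto
    define i0 where "i0 = max 1 i1"
    have i0: "1 \<le> i0" by (simp add: i0_def)
    have Fc: "\<forall>i\<ge>i0. c \<le> F i (X0 i)" using i1 by (auto simp: i0_def less_imp_le)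
    define h where "h j = F j (Suc (X0 j))" for j
    have h0: "0 \<le> h j" if "1 \<le> j" for j unfolding h_def using F_pos'[OF that, of "Suc (X0 j)"] by simp
    show ?thesis unfolding tendsto_iff
    proof (intro allI impI)
      fix e :: real assume e: "0 < e"
      define y where "y = 2 * real K / e + 1"
      have "0 \<le> 2 * real K / e" using e by simp
      then have y0: "0 < y" by (simp add: y_def)
      define S where "S = 2 * real K * y / c"
      have S0: "0 < S" using K1 y0 c0 by (simp add: S_def)
      have ey: "real K * exp (- y) < e / 2"
      proof -
        have ey1: "1 + y \<le> exp y" by (rule exp_ge_add_one_self)
        have "2 * real K / e < y" by (simp add: y_def)
        then have "2 * real K / e < exp y" using ey1 by linarith
        then have "2 * real K < exp y * e" by (subst (asm) pos_divide_less_eq[OF e])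
        then have "real K < e / 2 * exp y" by (simp add: ac_simps)
        then have "real K / exp y < e / 2" by (subst pos_divide_less_eq) auto
        moreover have "real K * exp (- y) = real K / exp y" by (simp add: exp_minus divide_inverse)
        ultimately show ?thesis by simp
      qed
      define \<eta> where "\<eta> = e / (4 * real K * S)"
      have eta0: "0 < \<eta>" using e K1 S0 by (simp add: \<eta>_def)
      have "eventually (\<lambda>i. dist (F i (X0 i + 1) / real i) 0 < \<eta>) sequentially"
        by (rule tendstoD[OF Lr eta0])
      then obtain j1 where j1': "\<forall>j\<ge>j1. dist (F j (X0 j + 1) / real j) 0 < \<eta>"
        unfolding eventually_sequentially by blast
      have j1: "\<forall>j\<ge>j1. \<bar>F j (X0 j + 1) / real j\<bar> < \<eta>"
        using j1' by (simp add: dist_real_def)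
      define H0 where "H0 = (\<Sum>j\<in>{1..j1}. h j)"
      have H00: "0 \<le> H0" unfolding H0_def using h0 by (intro sum_nonneg) auto
      have hb: "h j \<le> H0 + \<eta> * real A" if j: "j \<in> {1..A}" for j A
      proof -
        have etaA: "0 \<le> \<eta> * real A" using eta0 by simp
        show ?thesis
        proof (cases "j \<le> j1")
          case True
          have "h j \<le> H0" unfolding H0_def
            by (rule member_le_sum) (use True j h0 in auto)
          then show ?thesis using etaA by linarith
        next
          case False
          then have "\<bar>F j (X0 j + 1) / real j\<bar> < \<eta>" using j1 by simp
          then have "F j (X0 j + 1) / real j < \<eta>" by (meson abs_ge_self le_less_trans)
          then have "h j / real j < \<eta>" by (simp add: h_def)
          then have "h j < \<eta> * real j" using j by (subst (asm) pos_divide_less_eq) auto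
          also have "\<dots> \<le> \<eta> * real A" using j eta0 by (intro mult_left_mono) auto
          finally show ?thesis using H00 by linarith
        qed
      qed
      obtain A2 :: nat where A2: "4 * (real K - 1) * S * H0 / e < real A2" using reals_Archimedean2 by blast
      have ev: "eventually (\<lambda>A. 2 * (i0 + K) \<le> A \<and> A2 \<le> A) sequentially"
        by (rule eventually_sequentiallyI[of "max (2 * (i0 + K)) A2"]) auto
      show "eventually (\<lambda>A. dist (prob {tau \<in> space M. K \<le> card {i\<in>{1..A}. urn_final A X0 tau i \<noteq> enat (X0 i)}}) 1 < e) sequentially"
        using ev
      proof eventually_elim
        case (elim A)
        have A0: "0 < A" using elim K1 by simp
        define m where "m = (A - i0) div K"
        have Km: "A - i0 - (K - 1) \<le> K * m"
        proof -
          have "K * m + (A - i0) mod K = A - i0" by (simp add: m_def)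
          moreover have "(A - i0) mod K < K" using K1 by simp
          ultimately show ?thesis by arith
        qed
        have m1: "1 \<le> m"
        proof -
          have "K \<le> A - i0" using elim by arith
          then have "K div K \<le> (A - i0) div K" by (rule div_le_mono)
          then show ?thesis using K1 by (simp add: m_def)
        qed
        have bl: "i0 + K * m \<le> A + 1"
        proof -
          have "K * m \<le> A - i0" unfolding m_def by simp
          then show ?thesis using elim by arith
        qed
        have Am: "real A \<le> 2 * real K * real m"
        proof -
          have "A \<le> 2 * (K * m)" using Km elim by arith
          then have "real A \<le> real (2 * (K * m))" by (rule of_nat_mono)
          then show ?thesis by (simp add: mult.assoc)
        qed
        define s where "s = S / real A"
        have s0: "0 < s" using S0 A0 by (simp add: s_def)
        define H where "H = H0 + \<eta> * real A"
        have HH: "\<forall>j\<in>{1..A}. F j (Suc (X0 j)) \<le> H" using hb by (simp add: H_def h_def)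
        have H0': "0 \<le> H" using H00 eta0 by (simp add: H_def)
        have fb: "prob {\<omega>\<in>space M. \<not> K \<le> card {i\<in>{1..A}. urn_final A X0 \<omega> i \<noteq> enat (X0 i)}}
             \<le> real K * exp (- c * s * real m) + (real K - 1) * (s * H)"
          by (rule fail_bound[OF K1 c0 i0 Fc s0 bl m1 H0' HH])
        have t1: "real K * exp (- c * s * real m) \<le> real K * exp (- y)"
        proof -
          have "y = c * S / (2 * real K)" using K1 c0 by (simp add: S_def)
          also have "\<dots> \<le> c * S / (2 * real K) * (2 * real K * real m / real A)"
          proof -
            have r1: "1 \<le> 2 * real K * real m / real A" using Am A0 by simp
            have y0': "0 \<le> c * S / (2 * real K)" using c0 S0 by simp
            show ?thesis using mult_left_mono[OF r1 y0'] by simp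
          qed
          also have "\<dots> = c * s * real m"
          proof -
            have ne: "real K \<noteq> 0" "real A \<noteq> 0" using K1 A0 by auto
            then show ?thesis unfolding s_def by (rule h_t1)
          qed
          finally have "exp (- (c * s * real m)) \<le> exp (- y)" by simp
          then show ?thesis by (intro mult_left_mono) auto
        qed
        have t2: "(real K - 1) * (s * H) < e / 2"
        proof -
          have "(real K - 1) * (s * H) = (real K - 1) * S * H0 / real A + (real K - 1) * S * \<eta>"
          proof -
            have ne: "real A \<noteq> 0" using A0 by auto
            then show ?thesis unfolding s_def H_def by (rule h_t2)
          qed
          moreover have "(real K - 1) * S * H0 / real A < e / 4"
          proof (cases "(real K - 1) * S * H0 = 0")
            case True show ?thesis by (subst True) (use e in simp)
          next
            case False
            have "4 * (real K - 1) * S * H0 / e < real A" using A2 elim by linarith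
            then have "4 * (real K - 1) * S * H0 < real A * e" using e by (simp add: divide_less_eq)
            then have "(real K - 1) * S * H0 * 4 < e * real A" by (simp add: algebra_simps)
            then show ?thesis using e A0 by (simp add: divide_less_eq)
          qed
          moreover have "(real K - 1) * S * \<eta> \<le> e / 4"
          proof -
            have "(real K - 1) * S * \<eta> = e / 4 * ((real K - 1) / real K)"
            proof -
              have ne: "real K \<noteq> 0" "S \<noteq> 0" using K1 S0 by auto
              then show ?thesis unfolding \<eta>_def by (rule h_t4)
            qed
            also have "\<dots> \<le> e / 4 * 1" using e K1 by (intro mult_left_mono) auto
            finally show ?thesis by simp
          qed
          ultimately show ?thesis by linarith
        qed
        define Su where "Su = {tau \<in> space M. K \<le> card {i\<in>{1..A}. urn_final A X0 tau i \<noteq> enat (X0 i)}}"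
        have Sus: "Su \<in> events" unfolding Su_def
        proof (rule card_Q_sets)
          fix i show "{\<omega> \<in> space M. urn_final A X0 \<omega> i \<noteq> enat (X0 i)} \<in> events"
            using sets.compl_sets[OF stay_sets[of A i]] by (simp add: set_diff_eq)
        qed simp
        have "{\<omega>\<in>space M. \<not> K \<le> card {i\<in>{1..A}. urn_final A X0 \<omega> i \<noteq> enat (X0 i)}} = space M - Su"
          by (auto simp: Su_def)
        then have "1 - prob Su < e" using fb t1 t2 ey prob_compl[OF Sus] by simp
        moreover have "prob Su \<le> 1" by simp
        ultimately show ?case unfolding Su_def[symmetric] by (simp add: dist_real_def)
      qed
    qed
  qed
qed

end

theorem theorem5:
  fixes F :: "nat \<Rightarrow> nat \<Rightarrow> real" and X0 :: "nat \<Rightarrow> nat" and B :: "nat set"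
  assumes F_pos: "\<forall>i\<ge>1. \<forall>k\<ge>1. 0 < F i k"
    and X0_pos: "\<forall>i\<ge>1. 1 \<le> X0 i"
    and B_sub: "B \<subseteq> {1..}" and B_inf: "infinite B"
    and B_sum: "(\<Sum>k. (SUP i\<in>B. ennreal (1 / F i (Suc k)))) < \<infinity>"
  shows "(((\<lambda>A. measure (sojourn_law F X0)
              {tau \<in> space (sojourn_law F X0). urn_final A X0 tau 1 = enat (X0 1)})
            \<longlongrightarrow> 1) at_top) \<and>
         (limsup (\<lambda>i. ereal (F i (X0 i))) < \<infinity> \<longrightarrow>
           weak_conv_m
             (\<lambda>A. distr (sojourn_law F X0) borel
                (\<lambda>tau. real (card {i\<in>{1..A}. urn_final A X0 tau i = enat (X0 i)}) / real A))
             (return borel 1)) \<and>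
         (liminf (\<lambda>i. ereal (F i (X0 i))) > 0 \<longrightarrow>
         ((\<lambda>i. F i (X0 i + 1) / real i) \<longlonglongrightarrow> 0) \<longrightarrow>
         (\<forall>K::nat. ((\<lambda>A. measure (sojourn_law F X0)
              {tau \<in> space (sojourn_law F X0).
                 K \<le> card {i\<in>{1..A}. urn_final A X0 tau i \<noteq> enat (X0 i)}}) \<longlongrightarrow> 1) at_top))"
proof -
  interpret setting F X0 by unfold_locales (use F_pos X0_pos in auto)
  show ?thesis
    using claim1[OF B_sub B_inf B_sum] claim2[OF B_sub B_inf B_sum] claim3
    by blast
qed

end
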